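(* Let $H$ be a subgroup of a group $G$, let $W$ be a subset of a finitely generated group $F$ whose commutator subgroup $F'$ has infinite index in $F$, and let $W\ni w\mapsto g_w\in G$ be an arbitrary map. Then the number of homomorphisms $\varphi: F\to G$ such that $\varphi(w)\in Hg_wH$ for all $w\in W$ is divisible by $|H|$.
   Context: Groups need not be finite; divisibility is understood in the sense of cardinal arithmetic: an infinite cardinal is divisible by every nonzero cardinal not exceeding it. *)

theory Defs
  imports "HOL-Algebra.Algebra" "HOL-Library.Equipollence"
begin

text \<open>Cardinal divisibility: the cardinality of A is divisible by that of B,
  i.e. |A| = |B| * |C| for some cardinal |C| (cardinal multiplication = product of sets).
  A witness C can always be taken inside the element type of A.\<close>
definition card_dvd :: "'b set \<Rightarrow> 'a set \<Rightarrow> bool" where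
  "card_dvd B A \<longleftrightarrow> (\<exists>C :: 'a set. A \<approx> B \<times> C)"

definition finitely_generated_group :: "('a, 'b) monoid_scheme \<Rightarrow> bool" where
  "finitely_generated_group F \<longleftrightarrow>
     (\<exists>S. finite S \<and> S \<subseteq> carrier F \<and> generate F S = carrier F)"

text \<open>Homomorphisms F \<rightarrow> G, as functions on carrier F (extensional, so that each
  homomorphism is counted once).\<close>
definition homs :: "('a, 'c) monoid_scheme \<Rightarrow> ('b, 'd) monoid_scheme \<Rightarrow> ('a \<Rightarrow> 'b) set" where
  "homs F G = hom F G \<inter> extensional (carrier F)"

definition double_coset :: "('a, 'b) monoid_scheme \<Rightarrow> 'a set \<Rightarrow> 'a \<Rightarrow> 'a set" where
  "double_coset G H g = H <#>\<^bsub>G\<^esub> (g <#\<^bsub>G\<^esub> H)"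

end

theory Submission
  imports Defs
begin

lemma (in comm_group) gen_insert:
  assumes s: "s \<in> carrier G" and S: "S \<subseteq> carrier G"
  shows "generate G (insert s S) = (\<lambda>(b, k::int). b \<otimes> s [^] k) ` (generate G S \<times> UNIV)"
    (is "_ = ?R")
proof
  have gS: "generate G S \<subseteq> carrier G" using generate_incl[OF S] .
  have sub: "subgroup ?R G"
  proof
    show "?R \<subseteq> carrier G" using gS s by auto
    show "\<one> \<in> ?R"
      by (rule image_eqI[where x="(\<one>, 0)"]) (simp_all add: generate.one)
  next
    fix x y assume "x \<in> ?R" "y \<in> ?R"
    then obtain b k b' k' where x: "x = b \<otimes> s [^] (k::int)" "b \<in> generate G S"
      and y: "y = b' \<otimes> s [^] (k'::int)" "b' \<in> generate G S" by auto
    have c: "b \<in> carrier G" "b' \<in> carrier G" using x(2) y(2) gS by auto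
    have cm: "s [^] k \<otimes> (b' \<otimes> s [^] k') = b' \<otimes> (s [^] k \<otimes> s [^] k')"
      by (rule m_lcomm) (use c s in auto)
    have "x \<otimes> y = b \<otimes> (s [^] k \<otimes> (b' \<otimes> s [^] k'))"
      unfolding x(1) y(1) by (rule m_assoc) (use c s in auto)
    also have "\<dots> = b \<otimes> (b' \<otimes> (s [^] k \<otimes> s [^] k'))" by (simp only: cm)
    also have "\<dots> = (b \<otimes> b') \<otimes> (s [^] k \<otimes> s [^] k')"
      by (rule m_assoc[symmetric]) (use c s in auto)
    also have "\<dots> = (b \<otimes> b') \<otimes> s [^] (k + k')"
      by (simp only: int_pow_mult[OF s])
    finally have e: "x \<otimes> y = (b \<otimes> b') \<otimes> s [^] (k + k')" .
    have "b \<otimes> b' \<in> generate G S" using x(2) y(2) by (rule generate.eng)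
    then show "x \<otimes> y \<in> ?R"
      by (intro image_eqI[where x="(b \<otimes> b', k + k')"]) (simp_all add: e)
  next
    fix x assume "x \<in> ?R"
    then obtain b k where x: "x = b \<otimes> s [^] (k::int)" "b \<in> generate G S" by auto
    have c: "b \<in> carrier G" using x(2) gS by auto
    have e: "inv x = inv b \<otimes> s [^] (- k)"
      unfolding x(1) int_pow_neg[OF s] by (rule inv_mult) (use c s in auto)
    have "inv b \<in> generate G S" using generate_m_inv_closed[OF S x(2)] .
    then show "inv x \<in> ?R"
      by (intro image_eqI[where x="(inv b, - k)"]) (simp_all add: e)
  qed
  have "insert s S \<subseteq> ?R"
  proof
    fix x assume "x \<in> insert s S"
    then show "x \<in> ?R"
    proof
      assume "x = s" then show ?thesis using s
        by (intro image_eqI[where x="(\<one>, 1)"]) (simp_all add: generate.one)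
    next
      assume xS: "x \<in> S" then show ?thesis using S
        by (intro image_eqI[where x="(x, 0)"]) (auto simp add: generate.incl)
    qed
  qed
  then show "generate G (insert s S) \<subseteq> ?R" using generate_subgroup_incl sub by blast
next
  have sub: "subgroup (generate G (insert s S)) G" using generate_is_subgroup s S by auto
  show "?R \<subseteq> generate G (insert s S)"
  proof
    fix x assume "x \<in> ?R"
    then obtain b k where x: "x = b \<otimes> s [^] (k::int)" "b \<in> generate G S" by auto
    have "b \<in> generate G (insert s S)" using mono_generate[of S "insert s S"] x(2) by blast
    moreover have "s [^] k \<in> generate G (insert s S)"
      using subgroup_int_pow_closed[OF sub generate.incl[of s "insert s S" G]] by simp
    ultimately show "x \<in> generate G (insert s S)" unfolding x(1) by (rule subgroup.m_closed[OF sub])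
  qed
qed

lemma addhD: "\<forall>x\<in>V. \<forall>y\<in>V. f (x \<otimes>\<^bsub>G\<^esub> y) = f x + (f y::int) \<Longrightarrow> x \<in> V \<Longrightarrow> y \<in> V
  \<Longrightarrow> f (x \<otimes>\<^bsub>G\<^esub> y) = f x + f y"
  by blast

lemma (in group) addh_one:
  assumes "\<forall>x\<in>V. \<forall>y\<in>V. f (x \<otimes> y) = f x + (f y::int)" "subgroup V G" shows "f \<one> = 0"
proof -
  have "\<one> \<in> V" using assms(2) by (rule subgroup.one_closed)
  then have "f (\<one> \<otimes> \<one>) = f \<one> + f \<one>" using addhD[OF assms(1)] by blast
  then show ?thesis by simp
qed

lemma (in group) addh_inv:
  assumes "\<forall>x\<in>V. \<forall>y\<in>V. f (x \<otimes> y) = f x + (f y::int)" "subgroup V G" "y \<in> V" shows "f (inv y) = - f y"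
proof -
  have yc: "y \<in> carrier G" using subgroup.subset[OF assms(2)] assms(3) by blast
  have "inv y \<in> V" using subgroup.m_inv_closed[OF assms(2,3)] .
  then have "f (y \<otimes> inv y) = f y + f (inv y)" using addhD[OF assms(1)] assms(3) by blast
  then show ?thesis using addh_one[OF assms(1,2)] yc by simp
qed

lemma (in group) addh_natpow:
  assumes "\<forall>x\<in>V. \<forall>y\<in>V. f (x \<otimes> y) = f x + (f y::int)" "subgroup V G" "y \<in> V" shows "f (y [^] (n::nat)) = int n * f y"
proof (induction n)
  case 0 then show ?case using addh_one[OF assms(1,2)] by simp
next
  case (Suc n)
  have yc: "y \<in> carrier G" using subgroup.subset[OF assms(2)] assms(3) by blast
  have "y [^] n \<in> V" using subgroup_int_pow_closed[OF assms(2,3), of "int n"] by (simp add: int_pow_int)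
  then have "f (y [^] n \<otimes> y) = f (y [^] n) + f y" using addhD[OF assms(1)] assms(3) by blast
  moreover have "y [^] Suc n = y [^] n \<otimes> y" by (rule nat_pow_Suc)
  ultimately have "f (y [^] Suc n) = int n * f y + f y" using Suc by simp
  then show ?case by (simp add: distrib_right)
qed

lemma (in group) addh_pow:
  assumes "\<forall>x\<in>V. \<forall>y\<in>V. f (x \<otimes> y) = f x + (f y::int)" "subgroup V G" "y \<in> V" shows "f (y [^] (n::int)) = n * f y"
proof (cases "n \<ge> 0")
  case True
  then obtain m where "n = int m" using nonneg_int_cases by blast
  then show ?thesis using addh_natpow[OF assms] by (simp add: int_pow_int)
next
  case False
  then have "- n \<ge> 0" by simp
  then obtain m where "- n = int m" using nonneg_int_cases by blast
  then have m: "n = - int m" by simp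
  have yc: "y \<in> carrier G" using subgroup.subset[OF assms(2)] assms(3) by blast
  have "y [^] m \<in> V" using subgroup_int_pow_closed[OF assms(2,3), of "int m"] by (simp add: int_pow_int)
  then show ?thesis using m addh_natpow[OF assms] addh_inv[OF assms(1,2)] yc
    by (simp add: int_pow_neg_int)
qed

lemma (in comm_group) prod_form:
  assumes "s \<in> carrier G" "b \<in> carrier G" "b' \<in> carrier G"
  shows "(b \<otimes> s [^] (k::int)) \<otimes> (b' \<otimes> s [^] (k'::int)) = (b \<otimes> b') \<otimes> s [^] (k + k')"
proof -
  have cm: "s [^] k \<otimes> (b' \<otimes> s [^] k') = b' \<otimes> (s [^] k \<otimes> s [^] k')"
    by (rule m_lcomm) (use assms in auto)
  have "(b \<otimes> s [^] k) \<otimes> (b' \<otimes> s [^] k') = b \<otimes> (s [^] k \<otimes> (b' \<otimes> s [^] k'))"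
    by (rule m_assoc) (use assms in auto)
  also have "\<dots> = b \<otimes> (b' \<otimes> (s [^] k \<otimes> s [^] k'))" by (simp only: cm)
  also have "\<dots> = (b \<otimes> b') \<otimes> (s [^] k \<otimes> s [^] k')"
    by (rule m_assoc[symmetric]) (use assms in auto)
  also have "\<dots> = (b \<otimes> b') \<otimes> s [^] (k + k')"
    by (simp only: int_pow_mult[OF assms(1)])
  finally show ?thesis .
qed

lemma (in group) eq_pow:
  assumes s: "s \<in> carrier G" and b: "b \<in> carrier G" "b' \<in> carrier G"
    and e: "b \<otimes> s [^] (k::int) = b' \<otimes> s [^] (k'::int)"
  shows "s [^] (k - k') = inv b \<otimes> b'"
proof -
  have c: "s [^] k \<in> carrier G" "s [^] k' \<in> carrier G" using s by auto
  have "s [^] k = inv b \<otimes> (b' \<otimes> s [^] k')"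
    using e b c by (simp add: inv_solve_left)
  then have "s [^] k \<otimes> inv (s [^] k') = inv b \<otimes> (b' \<otimes> s [^] k') \<otimes> inv (s [^] k')" by simp
  also have "\<dots> = inv b \<otimes> b'" using b c by (simp add: m_assoc)
  finally show ?thesis using int_pow_diff[OF s] by simp
qed

lemma (in comm_group) extend_hom:
  assumes s: "s \<in> carrier G" and B: "subgroup B G"
    and wd: "\<And>b k b' k'. b \<in> B \<Longrightarrow> b' \<in> B \<Longrightarrow> b \<otimes> s [^] (k::int) = b' \<otimes> s [^] (k'::int) \<Longrightarrow> h b k = h b' k'"
    and ad: "\<And>b k b' k'. b \<in> B \<Longrightarrow> b' \<in> B \<Longrightarrow> h (b \<otimes> b') (k + k') = h b k + (h b' k'::int)"
  shows "\<exists>g. (\<forall>x\<in>(\<lambda>(b, k::int). b \<otimes> s [^] k) ` (B \<times> UNIV). \<forall>y\<in>(\<lambda>(b, k::int). b \<otimes> s [^] k) ` (B \<times> UNIV).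
     g (x \<otimes> y) = g x + g y) \<and> (\<forall>b\<in>B. \<forall>k. g (b \<otimes> s [^] k) = h b k)"
proof -
  define g where "g x = (let p = (SOME p. p \<in> B \<times> (UNIV::int set) \<and> x = fst p \<otimes> s [^] snd p) in h (fst p) (snd p))" for x
  have gv: "g (b \<otimes> s [^] k) = h b k" if "b \<in> B" for b k
  proof -
    let ?P = "\<lambda>p. p \<in> B \<times> (UNIV::int set) \<and> b \<otimes> s [^] k = fst p \<otimes> s [^] snd p"
    have "?P (b, k)" using that by simp
    then have P: "?P (SOME p. ?P p)" by (rule someI)
    define p where "p = (SOME p. ?P p)"
    have p1: "fst p \<in> B" using P unfolding p_def by (simp add: mem_Times_iff)
    have p2: "b \<otimes> s [^] k = fst p \<otimes> s [^] snd p" using P unfolding p_def by simp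
    have "h b k = h (fst p) (snd p)" by (rule wd[OF that p1 p2])
    then show ?thesis unfolding g_def Let_def p_def by simp
  qed
  have Bc: "B \<subseteq> carrier G" using B by (rule subgroup.subset)
  show ?thesis
  proof (intro exI conjI ballI allI)
    fix x y assume "x \<in> (\<lambda>(b, k::int). b \<otimes> s [^] k) ` (B \<times> UNIV)" "y \<in> (\<lambda>(b, k::int). b \<otimes> s [^] k) ` (B \<times> UNIV)"
    then obtain b k b' k' where x: "x = b \<otimes> s [^] (k::int)" "b \<in> B"
      and y: "y = b' \<otimes> s [^] (k'::int)" "b' \<in> B" by auto
    have "x \<otimes> y = (b \<otimes> b') \<otimes> s [^] (k + k')"
      unfolding x(1) y(1) by (rule prod_form[OF s]) (use x(2) y(2) Bc in auto)
    moreover have "b \<otimes> b' \<in> B" using subgroup.m_closed[OF B x(2) y(2)] .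
    ultimately have "g (x \<otimes> y) = h (b \<otimes> b') (k + k')" using gv by simp
    also have "\<dots> = h b k + h b' k'" by (rule ad[OF x(2) y(2)])
    also have "\<dots> = g x + g y" using gv x y by simp
    finally show "g (x \<otimes> y) = g x + g y" .
  next
    fix b k assume "b \<in> B" then show "g (b \<otimes> s [^] k) = h b k" by (rule gv)
  qed
qed

lemma (in group) pow_periodic:
  assumes s: "s \<in> carrier G" and N: "s [^] (N::int) = \<one>" "N > 0"
  shows "s [^] (k::int) = s [^] (k mod N)"
proof -
  have "k = N * (k div N) + k mod N" by simp
  then have "s [^] k = s [^] (N * (k div N)) \<otimes> s [^] (k mod N)"
    by (metis int_pow_mult s)
  also have "s [^] (N * (k div N)) = \<one>"
    using int_pow_pow[OF s, of N "k div N"] N(1) by simp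
  finally show ?thesis using s by simp
qed

lemma (in group) finite_subgroup_pow_one:
  assumes s: "s \<in> carrier G" and B: "subgroup B G" "finite B" and m: "m \<noteq> 0" "s [^] (m::int) \<in> B"
  shows "\<exists>N::int. N > 0 \<and> s [^] N = \<one>"
proof -
  let ?f = "\<lambda>j::nat. (s [^] m) [^] (int j)"
  have "?f ` UNIV \<subseteq> B" using subgroup_int_pow_closed[OF B(1) m(2)] by auto
  then have "finite (?f ` UNIV)" using B(2) finite_subset by blast
  then have "\<not> inj_on ?f UNIV" using finite_imageD infinite_UNIV_nat by blast
  then obtain i j where ij: "i \<noteq> j" "?f i = ?f j" unfolding inj_on_def by blast
  have sm: "s [^] m \<in> carrier G" using s by simp
  have "(s [^] m) [^] (int i - int j) = ?f i \<otimes> inv (?f j)" by (rule int_pow_diff[OF sm])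
  also have "\<dots> = \<one>" using ij(2) sm by simp
  finally have "s [^] (m * (int i - int j)) = \<one>" using int_pow_pow[OF s] by simp
  moreover have nz: "m * (int i - int j) \<noteq> 0" using m ij by simp
  ultimately show ?thesis
  proof (cases "m * (int i - int j) > 0")
    case True then show ?thesis using \<open>s [^] (m * (int i - int j)) = \<one>\<close> by blast
  next
    case False
    have aux: "\<And>M::int. M \<noteq> 0 \<Longrightarrow> \<not> M > 0 \<Longrightarrow> -M > 0" by arith
    have "- (m * (int i - int j)) > 0" by (rule aux[OF nz False])
    moreover have "s [^] (- (m * (int i - int j))) = \<one>"
      using int_pow_neg[OF s, of "m * (int i - int j)"] \<open>s [^] (m * (int i - int j)) = \<one>\<close> by simp
    ultimately show ?thesis by blast
  qed
qed

lemma (in comm_group) fg_dichotomy: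
  assumes "finite S" "S \<subseteq> carrier G"
  shows "finite (generate G S) \<or> (\<exists>f. (\<forall>x\<in>generate G S. \<forall>y\<in>generate G S. f (x \<otimes> y) = f x + (f y::int)) \<and> (\<exists>x\<in>generate G S. f x \<noteq> 0))"
  using assms
proof (induction S rule: finite_induct)
  case empty then show ?case using generate_empty by simp
next
  case (insert s S)
  have s: "s \<in> carrier G" and S: "S \<subseteq> carrier G" using insert.prems by auto
  define B where "B = generate G S"
  have B: "subgroup B G" unfolding B_def using generate_is_subgroup[OF S] .
  have Bc: "B \<subseteq> carrier G" using B by (rule subgroup.subset)
  have R: "generate G (insert s S) = (\<lambda>(b, k::int). b \<otimes> s [^] k) ` (B \<times> UNIV)"
    unfolding B_def by (rule gen_insert[OF s S])
  have IH: "finite B \<or> (\<exists>f. (\<forall>x\<in>B. \<forall>y\<in>B. f (x \<otimes> y) = f x + (f y::int)) \<and> (\<exists>x\<in>B. f x \<noteq> 0))"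
    using insert.IH S unfolding B_def by blast
  show ?case
  proof (cases "\<exists>m::int. m \<noteq> 0 \<and> s [^] m \<in> B")
    case False
    have "\<exists>g. (\<forall>x\<in>(\<lambda>(b, k::int). b \<otimes> s [^] k) ` (B \<times> UNIV). \<forall>y\<in>(\<lambda>(b, k::int). b \<otimes> s [^] k) ` (B \<times> UNIV).
     g (x \<otimes> y) = g x + g y) \<and> (\<forall>b\<in>B. \<forall>k. g (b \<otimes> s [^] k) = (\<lambda>b k. k) b (k::int))"
    proof (rule extend_hom[OF s B, where h="\<lambda>b k. k"])
      fix b k b' k' assume bb: "b \<in> B" "b' \<in> B" and e: "b \<otimes> s [^] (k::int) = b' \<otimes> s [^] (k'::int)"
      have "s [^] (k - k') = inv b \<otimes> b'" by (rule eq_pow[OF s _ _ e]) (use bb Bc in auto)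
      moreover have "inv b \<otimes> b' \<in> B"
        using subgroup.m_closed[OF B subgroup.m_inv_closed[OF B bb(1)] bb(2)] .
      ultimately have "k - k' = 0" using False by (metis)
      then show "k = k'" by simp
    qed simp
    then obtain g where g: "\<forall>x\<in>generate G (insert s S). \<forall>y\<in>generate G (insert s S). g (x \<otimes> y) = g x + g y"
      and gv: "\<forall>b\<in>B. \<forall>k. g (b \<otimes> s [^] k) = (k::int)" unfolding R by auto
    have one: "\<one> \<in> B" using B by (rule subgroup.one_closed)
    have "g (\<one> \<otimes> s [^] (1::int)) = 1" using gv one by blast
    then have "g s = 1" using s by simp
    moreover have "s \<in> generate G (insert s S)" by (rule generate.incl) simp
    ultimately show ?thesis using g by (intro disjI2 exI[of _ g] conjI bexI[of _ s]) auto
  next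
    case True
    then obtain m :: int where m: "m \<noteq> 0" "s [^] m \<in> B" by blast
    from IH show ?thesis
    proof
      assume fin: "finite B"
      obtain N :: int where N: "N > 0" "s [^] N = \<one>"
        using finite_subgroup_pow_one[OF s B fin m] by blast
      have "generate G (insert s S) \<subseteq> (\<lambda>(b, k::int). b \<otimes> s [^] k) ` (B \<times> {0..<N})"
      proof
        fix x assume "x \<in> generate G (insert s S)"
        then obtain b k where x: "x = b \<otimes> s [^] (k::int)" "b \<in> B" unfolding R by auto
        have "x = b \<otimes> s [^] (k mod N)" unfolding x(1) using pow_periodic[OF s N(2,1)] by simp
        moreover have "(b, k mod N) \<in> B \<times> {0..<N}" using x(2) N(1) by simp
        ultimately show "x \<in> (\<lambda>(b, k::int). b \<otimes> s [^] k) ` (B \<times> {0..<N})"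
          by (intro image_eqI[where x="(b, k mod N)"]) simp_all
      qed
      moreover have "finite ((\<lambda>(b, k::int). b \<otimes> s [^] k) ` (B \<times> {0..<N}))"
        using fin by simp
      ultimately show ?thesis using finite_subset by blast
    next
      assume "\<exists>f. (\<forall>x\<in>B. \<forall>y\<in>B. f (x \<otimes> y) = f x + (f y::int)) \<and> (\<exists>x\<in>B. f x \<noteq> 0)"
      then obtain f x0 where f: "\<forall>x\<in>B. \<forall>y\<in>B. f (x \<otimes> y) = f x + (f y::int)" and x0: "x0 \<in> B" "f x0 \<noteq> 0"
        by blast
      let ?X = "f (s [^] m)"
      have "\<exists>g. (\<forall>x\<in>(\<lambda>(b, k::int). b \<otimes> s [^] k) ` (B \<times> UNIV). \<forall>y\<in>(\<lambda>(b, k::int). b \<otimes> s [^] k) ` (B \<times> UNIV).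
       g (x \<otimes> y) = g x + g y) \<and> (\<forall>b\<in>B. \<forall>k. g (b \<otimes> s [^] k) = (\<lambda>b k. m * f b + k * ?X) b k)"
      proof (rule extend_hom[OF s B, where h="\<lambda>b k. m * f b + k * ?X"])
        fix b k b' k' assume bb: "b \<in> B" "b' \<in> B" and e: "b \<otimes> s [^] (k::int) = b' \<otimes> s [^] (k'::int)"
        have j: "s [^] (k - k') = inv b \<otimes> b'" by (rule eq_pow[OF s _ _ e]) (use bb Bc in auto)
        have ib: "inv b \<in> B" using subgroup.m_inv_closed[OF B bb(1)] .
        have jB: "s [^] (k - k') \<in> B" unfolding j using subgroup.m_closed[OF B ib bb(2)] .
        have "f (s [^] (k - k')) = f (inv b) + f b'" unfolding j by (rule addhD[OF f ib bb(2)])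
        also have "f (inv b) = - f b" by (rule addh_inv[OF f B bb(1)])
        finally have fj: "f (s [^] (k - k')) = f b' - f b" by simp
        have "(s [^] (k - k')) [^] m = (s [^] m) [^] (k - k')"
          using int_pow_pow[OF s] by (simp add: mult.commute)
        then have "f ((s [^] (k - k')) [^] m) = f ((s [^] m) [^] (k - k'))" by simp
        moreover have "f ((s [^] (k - k')) [^] m) = m * f (s [^] (k - k'))" by (rule addh_pow[OF f B jB])
        moreover have "f ((s [^] m) [^] (k - k')) = (k - k') * ?X" by (rule addh_pow[OF f B m(2)])
        ultimately have "m * (f b' - f b) = (k - k') * ?X" using fj by simp
        then have "m * f b' - m * f b = k * ?X - k' * ?X" by (simp add: right_diff_distrib left_diff_distrib)
        then show "m * f b + k * ?X = m * f b' + k' * ?X" by linarith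
      next
        fix b k b' k' assume bb: "b \<in> B" "b' \<in> B"
        have "f (b \<otimes> b') = f b + f b'" by (rule addhD[OF f bb])
        then show "m * f (b \<otimes> b') + (k + k') * ?X = (m * f b + k * ?X) + (m * f b' + k' * ?X)"
          by (simp add: distrib_left distrib_right)
      qed
      then obtain g where g: "\<forall>x\<in>generate G (insert s S). \<forall>y\<in>generate G (insert s S). g (x \<otimes> y) = g x + g y"
        and gv: "\<forall>b\<in>B. \<forall>k. g (b \<otimes> s [^] k) = m * f b + k * ?X" unfolding R by auto
      have "g (x0 \<otimes> s [^] (0::int)) = m * f x0 + 0 * ?X" by (rule gv[rule_format, OF x0(1)])
      then have "g x0 = m * f x0" using x0(1) Bc by (simp add: subsetD)
      then have "g x0 \<noteq> 0" using m(1) x0(2) by simp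
      moreover have "x0 \<in> generate G (insert s S)" unfolding R
        by (rule image_eqI[where x="(x0, 0)"]) (use x0(1) Bc in auto)
      ultimately show ?thesis using g by (intro disjI2 exI[of _ g] conjI bexI[of _ x0]) auto
    qed
  qed
qed

lemma (in group) normalize_hom:
  assumes f: "\<forall>x\<in>carrier G. \<forall>y\<in>carrier G. f (x \<otimes> y) = f x + (f y::int)"
    and x0: "x0 \<in> carrier G" "f x0 \<noteq> 0"
  shows "\<exists>\<pi> t. t \<in> carrier G \<and> (\<forall>x\<in>carrier G. \<forall>y\<in>carrier G. \<pi> (x \<otimes> y) = \<pi> x + (\<pi> y::int)) \<and> \<pi> t = 1"
proof -
  have sub: "subgroup (carrier G) G" by (rule subgroup_self)
  define P where "P n \<longleftrightarrow> n > 0 \<and> (\<exists>x\<in>carrier G. f x = int n)" for n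
  have "\<exists>n. P n"
  proof (cases "f x0 > 0")
    case True then show ?thesis unfolding P_def using x0(1)
      by (intro exI[of _ "nat (f x0)"]) auto
  next
    case False
    have "f (inv x0) = - f x0" by (rule addh_inv[OF f sub x0(1)])
    moreover have "- f x0 > 0" using False x0(2) by simp
    ultimately show ?thesis unfolding P_def using x0(1)
      by (intro exI[of _ "nat (- f x0)"]) (auto intro!: bexI[of _ "inv x0"])
  qed
  define d where "d = (LEAST n. P n)"
  have Pd: "P d" unfolding d_def using \<open>\<exists>n. P n\<close> by (metis LeastI)
  then obtain t where t: "t \<in> carrier G" "f t = int d" and d0: "d > 0" unfolding P_def by blast
  have dv: "int d dvd f x" if x: "x \<in> carrier G" for x
  proof -
    define q where "q = f x div int d"
    define r where "r = f x mod int d"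
    have "f x = int d * q + r" unfolding q_def r_def by simp
    have tq: "t [^] q \<in> carrier G" using t(1) by simp
    have "f (x \<otimes> inv (t [^] q)) = f x + f (inv (t [^] q))" by (rule addhD[OF f x]) (use tq in simp)
    also have "f (inv (t [^] q)) = - f (t [^] q)" by (rule addh_inv[OF f sub tq])
    also have "f (t [^] q) = q * int d" using addh_pow[OF f sub t(1)] t(2) by simp
    finally have fr: "f (x \<otimes> inv (t [^] q)) = r" using \<open>f x = int d * q + r\<close> by simp
    have r0: "r \<ge> 0" "r < int d" unfolding r_def using d0 by simp_all
    show ?thesis
    proof (cases "r = 0")
      case True then show ?thesis unfolding r_def by (simp add: dvd_eq_mod_eq_0)
    next
      case False
      then have "P (nat r)" unfolding P_def using r0 fr x tq
        by (intro conjI bexI[of _ "x \<otimes> inv (t [^] q)"]) auto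
      then have "d \<le> nat r" unfolding d_def by (rule Least_le)
      then show ?thesis using r0 by simp
    qed
  qed
  show ?thesis
  proof (intro exI conjI ballI)
    show "t \<in> carrier G" by (rule t(1))
    show "f t div int d = 1" using t(2) d0 by simp
  next
    fix x y assume xy: "x \<in> carrier G" "y \<in> carrier G"
    have "f (x \<otimes> y) = f x + f y" by (rule addhD[OF f xy])
    then show "f (x \<otimes> y) div int d = f x div int d + f y div int d"
      using dv[OF xy(1)] dv[OF xy(2)] by simp
  qed
qed

lemma surj_Z:
  assumes G: "group F" and fg: "finitely_generated_group F"
    and inf: "infinite (rcosets\<^bsub>F\<^esub> (derived F (carrier F)))"
  shows "\<exists>\<pi> t. t \<in> carrier F \<and> (\<forall>x\<in>carrier F. \<forall>y\<in>carrier F. \<pi> (x \<otimes>\<^bsub>F\<^esub> y) = \<pi> x + (\<pi> y::int)) \<and> \<pi> t = 1"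
proof -
  interpret F: group F by (rule G)
  let ?N = "derived F (carrier F)"
  interpret N: normal ?N F by (rule F.derived_self_is_normal)
  let ?A = "F Mod ?N"
  interpret A: comm_group ?A by (rule F.derived_quot_is_comm_group)
  let ?h = "\<lambda>a. ?N #>\<^bsub>F\<^esub> a"
  have hom: "?h \<in> hom F ?A" by (rule N.r_coset_hom_Mod)
  interpret h: group_hom F ?A ?h
    by (intro group_hom.intro group_hom_axioms.intro hom F.is_group A.is_group)
  obtain S where S: "finite S" "S \<subseteq> carrier F" "generate F S = carrier F"
    using fg unfolding finitely_generated_group_def by blast
  have cA: "carrier ?A = ?h ` carrier F" by (rule carrier_FactGroup)
  have gen: "generate ?A (?h ` S) = carrier ?A"
    using h.generate_img[OF S(2)] S(3) cA by simp
  have hS: "?h ` S \<subseteq> carrier ?A" using S(2) cA by auto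
  have "infinite (carrier ?A)" using inf by (simp add: FactGroup_def)
  then obtain f x0 where f: "\<forall>x\<in>carrier ?A. \<forall>y\<in>carrier ?A. f (x \<otimes>\<^bsub>?A\<^esub> y) = f x + (f y::int)"
      and x0: "x0 \<in> carrier ?A" "f x0 \<noteq> 0"
    using A.fg_dichotomy[OF finite_imageI[OF S(1)] hS] unfolding gen by blast
  obtain \<pi> t where t: "t \<in> carrier ?A" and pi: "\<forall>x\<in>carrier ?A. \<forall>y\<in>carrier ?A. \<pi> (x \<otimes>\<^bsub>?A\<^esub> y) = \<pi> x + (\<pi> y::int)"
      and pt: "\<pi> t = 1"
    using A.normalize_hom[OF f x0] by blast
  obtain t0 where t0: "t0 \<in> carrier F" "t = ?h t0" using t cA by blast
  show ?thesis
  proof (intro exI conjI ballI)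
    show "t0 \<in> carrier F" by (rule t0(1))
    show "(\<pi> \<circ> ?h) t0 = 1" using t0(2) pt by simp
  next
    fix x y assume xy: "x \<in> carrier F" "y \<in> carrier F"
    have "?h (x \<otimes>\<^bsub>F\<^esub> y) = ?h x \<otimes>\<^bsub>?A\<^esub> ?h y" by (rule h.hom_mult[OF xy])
    moreover have "?h x \<in> carrier ?A" "?h y \<in> carrier ?A" using xy cA by auto
    ultimately show "(\<pi> \<circ> ?h) (x \<otimes>\<^bsub>F\<^esub> y) = (\<pi> \<circ> ?h) x + (\<pi> \<circ> ?h) y"
      using addhD[OF pi] by simp
  qed
qed

lemma (in group) gc1: "x \<in> carrier G \<Longrightarrow> y \<in> carrier G \<Longrightarrow> x \<otimes> (inv x \<otimes> y) = y"
  by (simp add: m_assoc[symmetric])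
lemma (in group) gc2: "x \<in> carrier G \<Longrightarrow> y \<in> carrier G \<Longrightarrow> inv x \<otimes> (x \<otimes> y) = y"
  by (simp add: m_assoc[symmetric])

locale setting = group G + F: group F for G (structure) and F (structure) +
  fixes H and deg :: "_ \<Rightarrow> int" and t
  assumes H: "subgroup H G" and t: "t \<in> carrier F"
    and deg: "\<forall>x\<in>carrier F. \<forall>y\<in>carrier F. deg (x \<otimes>\<^bsub>F\<^esub> y) = deg x + deg y"
    and dt: "deg t = 1"
begin

definition K where "K = {x \<in> carrier F. deg x = 0}"
definition cj where "cj h \<phi> = (\<lambda>x\<in>carrier F. h \<otimes> \<phi> x \<otimes> inv h)"
definition dat where "dat \<phi> = (restrict \<phi> K, \<lambda>x\<in>carrier F. \<phi> x <# H)"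
definition Qs where "Qs \<phi> = {c \<in> H. (\<forall>k\<in>K. c \<otimes> \<phi> k = \<phi> k \<otimes> c) \<and> (\<forall>x\<in>carrier F. c <# (\<phi> x <# H) = \<phi> x <# H)}"
definition ext where "ext \<phi> q = (\<lambda>x\<in>carrier F. \<phi> (x \<otimes>\<^bsub>F\<^esub> inv\<^bsub>F\<^esub> (t [^]\<^bsub>F\<^esub> deg x)) \<otimes> (\<phi> t \<otimes> q) [^] deg x)"

lemma Hc: "H \<subseteq> carrier G" using H by (rule subgroup.subset)
lemma Hc': "h \<in> H \<Longrightarrow> h \<in> carrier G" using Hc by blast

lemma deg_pow: "deg (t [^]\<^bsub>F\<^esub> (n::int)) = n"
  using F.addh_pow[OF deg F.subgroup_self t, of n] dt by simp
lemma deg_inv: "x \<in> carrier F \<Longrightarrow> deg (inv\<^bsub>F\<^esub> x) = - deg x"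
  by (rule F.addh_inv[OF deg F.subgroup_self])
lemma deg_mult: "x \<in> carrier F \<Longrightarrow> y \<in> carrier F \<Longrightarrow> deg (x \<otimes>\<^bsub>F\<^esub> y) = deg x + deg y"
  using deg by blast

lemma kpart: assumes x: "x \<in> carrier F"
  shows "x \<otimes>\<^bsub>F\<^esub> inv\<^bsub>F\<^esub> (t [^]\<^bsub>F\<^esub> deg x) \<in> K"
proof -
  have c: "t [^]\<^bsub>F\<^esub> deg x \<in> carrier F" using t by simp
  have "deg (x \<otimes>\<^bsub>F\<^esub> inv\<^bsub>F\<^esub> (t [^]\<^bsub>F\<^esub> deg x)) = deg x + - deg x"
    using deg_mult[OF x F.inv_closed[OF c]] deg_inv[OF c] deg_pow by simp
  then show ?thesis unfolding K_def using x c by simp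
qed

lemma kdecomp: assumes x: "x \<in> carrier F"
  shows "x = (x \<otimes>\<^bsub>F\<^esub> inv\<^bsub>F\<^esub> (t [^]\<^bsub>F\<^esub> deg x)) \<otimes>\<^bsub>F\<^esub> t [^]\<^bsub>F\<^esub> deg x"
  using x t by (simp add: F.m_assoc)

lemma Kc: "K \<subseteq> carrier F" unfolding K_def by auto

lemma conjK: assumes k: "k \<in> K" shows "t [^]\<^bsub>F\<^esub> (n::int) \<otimes>\<^bsub>F\<^esub> k \<otimes>\<^bsub>F\<^esub> inv\<^bsub>F\<^esub> (t [^]\<^bsub>F\<^esub> n) \<in> K"
proof -
  have kc: "k \<in> carrier F" "deg k = 0" using k unfolding K_def by auto
  have c: "t [^]\<^bsub>F\<^esub> n \<in> carrier F" using t by simp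
  have "deg (t [^]\<^bsub>F\<^esub> n \<otimes>\<^bsub>F\<^esub> k \<otimes>\<^bsub>F\<^esub> inv\<^bsub>F\<^esub> (t [^]\<^bsub>F\<^esub> n)) = n + 0 + - n"
    using deg_mult[OF F.m_closed[OF c kc(1)] F.inv_closed[OF c]] deg_mult[OF c kc(1)] deg_inv[OF c] deg_pow kc(2)
    by simp
  then show ?thesis unfolding K_def using c kc by simp
qed

lemma homsD:
  assumes "\<phi> \<in> homs F G"
  shows "\<phi> \<in> hom F G" "\<phi> \<in> extensional (carrier F)"
  using assms unfolding homs_def by auto

lemma gh: "\<phi> \<in> homs F G \<Longrightarrow> group_hom F G \<phi>"
  by (intro group_hom.intro group_hom_axioms.intro homsD F.is_group is_group)

lemma ph_mult: "\<phi> \<in> homs F G \<Longrightarrow> x \<in> carrier F \<Longrightarrow> y \<in> carrier F \<Longrightarrow> \<phi> (x \<otimes>\<^bsub>F\<^esub> y) = \<phi> x \<otimes> \<phi> y"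
  using group_hom.hom_mult[OF gh] by blast
lemma ph_closed: "\<phi> \<in> homs F G \<Longrightarrow> x \<in> carrier F \<Longrightarrow> \<phi> x \<in> carrier G"
  using group_hom.hom_closed[OF gh] by blast
lemma ph_inv: "\<phi> \<in> homs F G \<Longrightarrow> x \<in> carrier F \<Longrightarrow> \<phi> (inv\<^bsub>F\<^esub> x) = inv (\<phi> x)"
  using group_hom.hom_inv[OF gh] by blast
lemma ph_pow: "\<phi> \<in> homs F G \<Longrightarrow> x \<in> carrier F \<Longrightarrow> \<phi> (x [^]\<^bsub>F\<^esub> (n::int)) = \<phi> x [^] n"
  using group_hom.hom_int_pow[OF gh] by blast
lemma ph_one: "\<phi> \<in> homs F G \<Longrightarrow> \<phi> \<one>\<^bsub>F\<^esub> = \<one>"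
  using group_hom.hom_one[OF gh] by blast

end


lemma int_ind0: "P 0 \<Longrightarrow> (\<And>i. P i \<Longrightarrow> P (i + 1)) \<Longrightarrow> (\<And>i. P i \<Longrightarrow> P (i - 1)) \<Longrightarrow> P (n::int)"
  by (rule int_induct[where k=0]) auto

lemma (in group) comm_conj: "q \<in> carrier G \<Longrightarrow> y \<in> carrier G \<Longrightarrow> q \<otimes> y = y \<otimes> q \<Longrightarrow> q \<otimes> y \<otimes> inv q = y"
  by (simp add: m_assoc)
lemma (in group) comm_conj': "q \<in> carrier G \<Longrightarrow> y \<in> carrier G \<Longrightarrow> q \<otimes> y = y \<otimes> q \<Longrightarrow> inv q \<otimes> y \<otimes> q = y"
  by (metis gc2 inv_closed m_assoc)

context setting begin

lemma conj_pow:
  assumes ph: "\<phi> \<in> homs F G" and q: "q \<in> carrier G" and comm: "\<forall>k\<in>K. q \<otimes> \<phi> k = \<phi> k \<otimes> q"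
  shows "\<forall>k\<in>K. (\<phi> t \<otimes> q) [^] (n::int) \<otimes> \<phi> k \<otimes> inv ((\<phi> t \<otimes> q) [^] n)
           = \<phi> (t [^]\<^bsub>F\<^esub> n \<otimes>\<^bsub>F\<^esub> k \<otimes>\<^bsub>F\<^esub> inv\<^bsub>F\<^esub> (t [^]\<^bsub>F\<^esub> n))"
proof (induction n rule: int_ind0)
  case 1
  show ?case using ph Kc by (auto simp add: ph_closed)
next
  case (2 i)
  show ?case
  proof
    fix k assume k: "k \<in> K"
    have kc: "k \<in> carrier F" using k Kc by blast
    let ?a = "\<phi> t" let ?b = "\<phi> t \<otimes> q" let ?c = "(\<phi> t \<otimes> q) [^] i"
    let ?k' = "t [^]\<^bsub>F\<^esub> i \<otimes>\<^bsub>F\<^esub> k \<otimes>\<^bsub>F\<^esub> inv\<^bsub>F\<^esub> (t [^]\<^bsub>F\<^esub> i)"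
    have k': "?k' \<in> K" by (rule conjK[OF k])
    have k'c: "?k' \<in> carrier F" using k' Kc by blast
    have ac: "?a \<in> carrier G" using ph_closed[OF ph t] .
    have bc: "?b \<in> carrier G" using ac q by simp
    have cc: "?c \<in> carrier G" using bc by simp
    have pk: "\<phi> k \<in> carrier G" "\<phi> ?k' \<in> carrier G" using ph_closed[OF ph] kc k'c by auto
    have IH: "?c \<otimes> \<phi> k \<otimes> inv ?c = \<phi> ?k'" using 2 k by blast
    have b1: "?b [^] (i + 1) = ?b \<otimes> ?c" using int_pow_mult[OF bc, of 1 i] bc by (simp add: add.commute)
    have "?b [^] (i + 1) \<otimes> \<phi> k \<otimes> inv (?b [^] (i + 1)) = ?b \<otimes> (?c \<otimes> \<phi> k \<otimes> inv ?c) \<otimes> inv ?b"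
      unfolding b1 using bc cc pk by (simp add: m_assoc inv_mult_group)
    also have "\<dots> = ?a \<otimes> (q \<otimes> \<phi> ?k' \<otimes> inv q) \<otimes> inv ?a"
      unfolding IH using ac q pk by (simp add: m_assoc inv_mult_group)
    also have "q \<otimes> \<phi> ?k' \<otimes> inv q = \<phi> ?k'" by (rule comm_conj[OF q pk(2)]) (use comm k' in blast)
    also have "?a \<otimes> \<phi> ?k' \<otimes> inv ?a = \<phi> (t \<otimes>\<^bsub>F\<^esub> ?k' \<otimes>\<^bsub>F\<^esub> inv\<^bsub>F\<^esub> t)"
      using ph_mult[OF ph] ph_inv[OF ph] t k'c by simp
    also have "t \<otimes>\<^bsub>F\<^esub> ?k' \<otimes>\<^bsub>F\<^esub> inv\<^bsub>F\<^esub> t = t [^]\<^bsub>F\<^esub> (i + 1) \<otimes>\<^bsub>F\<^esub> k \<otimes>\<^bsub>F\<^esub> inv\<^bsub>F\<^esub> (t [^]\<^bsub>F\<^esub> (i + 1))"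
    proof -
      have "t [^]\<^bsub>F\<^esub> (i + 1) = t \<otimes>\<^bsub>F\<^esub> t [^]\<^bsub>F\<^esub> i"
        using F.int_pow_mult[OF t, of 1 i] t by (simp add: add.commute)
      then show ?thesis using t kc by (simp add: F.m_assoc F.inv_mult_group)
    qed
    finally show "?b [^] (i + 1) \<otimes> \<phi> k \<otimes> inv (?b [^] (i + 1)) = \<phi> (t [^]\<^bsub>F\<^esub> (i + 1) \<otimes>\<^bsub>F\<^esub> k \<otimes>\<^bsub>F\<^esub> inv\<^bsub>F\<^esub> (t [^]\<^bsub>F\<^esub> (i + 1)))" .
  qed
next
  case (3 i)
  show ?case
  proof
    fix k assume k: "k \<in> K"
    have kc: "k \<in> carrier F" using k Kc by blast
    let ?a = "\<phi> t" let ?b = "\<phi> t \<otimes> q" let ?c = "(\<phi> t \<otimes> q) [^] i"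
    let ?k' = "t [^]\<^bsub>F\<^esub> i \<otimes>\<^bsub>F\<^esub> k \<otimes>\<^bsub>F\<^esub> inv\<^bsub>F\<^esub> (t [^]\<^bsub>F\<^esub> i)"
    let ?k'' = "inv\<^bsub>F\<^esub> t \<otimes>\<^bsub>F\<^esub> ?k' \<otimes>\<^bsub>F\<^esub> t"
    have k': "?k' \<in> K" by (rule conjK[OF k])
    have k'c: "?k' \<in> carrier F" using k' Kc by blast
    have k'': "?k'' \<in> K" using conjK[OF k', of "-1"] t by (simp add: F.int_pow_neg)
    have k''c: "?k'' \<in> carrier F" using k'' Kc by blast
    have ac: "?a \<in> carrier G" using ph_closed[OF ph t] .
    have bc: "?b \<in> carrier G" using ac q by simp
    have cc: "?c \<in> carrier G" using bc by simp
    have pk: "\<phi> k \<in> carrier G" "\<phi> ?k' \<in> carrier G" "\<phi> ?k'' \<in> carrier G" using ph_closed[OF ph] kc k'c k''c by auto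
    have IH: "?c \<otimes> \<phi> k \<otimes> inv ?c = \<phi> ?k'" using 3 k by blast
    have b1: "?b [^] (i - 1) = inv ?b \<otimes> ?c" using int_pow_mult[OF bc, of "-1" i] bc
      by (simp add: int_pow_neg)
    have "?b [^] (i - 1) \<otimes> \<phi> k \<otimes> inv (?b [^] (i - 1)) = inv ?b \<otimes> (?c \<otimes> \<phi> k \<otimes> inv ?c) \<otimes> ?b"
      unfolding b1 using bc cc pk by (simp add: m_assoc inv_mult_group)
    also have "\<dots> = inv q \<otimes> (inv ?a \<otimes> \<phi> ?k' \<otimes> ?a) \<otimes> q"
      unfolding IH using ac q pk by (simp add: m_assoc inv_mult_group)
    also have "inv ?a \<otimes> \<phi> ?k' \<otimes> ?a = \<phi> ?k''"
      using ph_mult[OF ph] ph_inv[OF ph] t k'c by simp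
    also have "inv q \<otimes> \<phi> ?k'' \<otimes> q = \<phi> ?k''" by (rule comm_conj'[OF q pk(3)]) (use comm k'' in blast)
    also have "?k'' = t [^]\<^bsub>F\<^esub> (i - 1) \<otimes>\<^bsub>F\<^esub> k \<otimes>\<^bsub>F\<^esub> inv\<^bsub>F\<^esub> (t [^]\<^bsub>F\<^esub> (i - 1))"
    proof -
      have "t [^]\<^bsub>F\<^esub> (i - 1) = inv\<^bsub>F\<^esub> t \<otimes>\<^bsub>F\<^esub> t [^]\<^bsub>F\<^esub> i"
        using F.int_pow_mult[OF t, of "-1" i] t by (simp add: F.int_pow_neg)
      then show ?thesis using t kc by (simp add: F.m_assoc F.inv_mult_group)
    qed
    finally show "?b [^] (i - 1) \<otimes> \<phi> k \<otimes> inv (?b [^] (i - 1)) = \<phi> (t [^]\<^bsub>F\<^esub> (i - 1) \<otimes>\<^bsub>F\<^esub> k \<otimes>\<^bsub>F\<^esub> inv\<^bsub>F\<^esub> (t [^]\<^bsub>F\<^esub> (i - 1)))" .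
  qed
qed

end

context setting begin

lemma lc_assoc: "g \<in> carrier G \<Longrightarrow> h \<in> carrier G \<Longrightarrow> (g \<otimes> h) <# H = g <# (h <# H)"
  using lcos_m_assoc[OF Hc] by simp

lemma lc_sub: "g \<in> carrier G \<Longrightarrow> g <# H \<subseteq> carrier G"
  by (rule l_coset_subset_G[OF Hc])

lemma coset_pow:
  assumes ph: "\<phi> \<in> homs F G" and q: "q \<in> H"
    and fx0: "\<forall>x\<in>carrier F. q <# (\<phi> x <# H) = \<phi> x <# H"
  shows "(\<phi> t \<otimes> q) [^] (n::int) <# H = \<phi> t [^] n <# H"
proof (induction n rule: int_ind0)
  case 1 then show ?case by simp
next
  case (2 i)
  have qc: "q \<in> carrier G" using q Hc by blast
  have ac: "\<phi> t \<in> carrier G" using ph_closed[OF ph t] .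
  have bc: "\<phi> t \<otimes> q \<in> carrier G" using ac qc by simp
  have b1: "(\<phi> t \<otimes> q) [^] (i + 1) = (\<phi> t \<otimes> q) \<otimes> (\<phi> t \<otimes> q) [^] i"
    using int_pow_mult[OF bc, of 1 i] bc by (simp add: add.commute)
  have a1: "\<phi> t [^] (i + 1) = \<phi> t \<otimes> \<phi> t [^] i"
    using int_pow_mult[OF ac, of 1 i] ac by (simp add: add.commute)
  have fx: "q <# (\<phi> t [^] i <# H) = \<phi> t [^] i <# H"
    using fx0 F.int_pow_closed[OF t, of i] ph_pow[OF ph t, of i] by metis
  have "(\<phi> t \<otimes> q) [^] (i + 1) <# H = (\<phi> t \<otimes> q) <# ((\<phi> t \<otimes> q) [^] i <# H)"
    unfolding b1 using bc by (simp add: lc_assoc)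
  also have "\<dots> = (\<phi> t \<otimes> q) <# (\<phi> t [^] i <# H)" by (simp only: 2)
  also have "\<dots> = \<phi> t <# (q <# (\<phi> t [^] i <# H))"
    using lcos_m_assoc[OF lc_sub[of "\<phi> t [^] i"] ac qc] ac by simp
  also have "\<dots> = \<phi> t <# (\<phi> t [^] i <# H)" by (simp only: fx)
  also have "\<dots> = \<phi> t [^] (i + 1) <# H" unfolding a1 using ac by (simp add: lc_assoc)
  finally show ?case .
next
  case (3 i)
  have qc: "q \<in> carrier G" using q Hc by blast
  have ac: "\<phi> t \<in> carrier G" using ph_closed[OF ph t] .
  have bc: "\<phi> t \<otimes> q \<in> carrier G" using ac qc by simp
  have b1: "(\<phi> t \<otimes> q) [^] (i - 1) = (inv q \<otimes> inv (\<phi> t)) \<otimes> (\<phi> t \<otimes> q) [^] i"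
    using int_pow_mult[OF bc, of "-1" i] bc ac qc by (simp add: int_pow_neg inv_mult_group)
  have a1: "\<phi> t [^] (i - 1) = inv (\<phi> t) \<otimes> \<phi> t [^] i"
    using int_pow_mult[OF ac, of "-1" i] ac by (simp add: int_pow_neg)
  have fx: "q <# (\<phi> t [^] (i - 1) <# H) = \<phi> t [^] (i - 1) <# H"
    using fx0 F.int_pow_closed[OF t, of "i - 1"] ph_pow[OF ph t, of "i - 1"] by metis
  have fx': "inv q <# (\<phi> t [^] (i - 1) <# H) = \<phi> t [^] (i - 1) <# H"
  proof -
    have "inv q <# (\<phi> t [^] (i - 1) <# H) = inv q <# (q <# (\<phi> t [^] (i - 1) <# H))" by (simp only: fx)
    also have "\<dots> = (inv q \<otimes> q) <# (\<phi> t [^] (i - 1) <# H)"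
      using lcos_m_assoc[OF lc_sub[of "\<phi> t [^] (i - 1)"]] ac qc by simp
    also have "\<dots> = \<phi> t [^] (i - 1) <# H" using qc lcos_mult_one[OF lc_sub[of "\<phi> t [^] (i - 1)"]] ac by simp
    finally show ?thesis .
  qed
  have "(\<phi> t \<otimes> q) [^] (i - 1) <# H = (inv q \<otimes> inv (\<phi> t)) <# ((\<phi> t \<otimes> q) [^] i <# H)"
    unfolding b1 using bc ac qc by (simp add: lc_assoc)
  also have "\<dots> = (inv q \<otimes> inv (\<phi> t)) <# (\<phi> t [^] i <# H)" by (simp only: 3)
  also have "\<dots> = inv q <# ((inv (\<phi> t) \<otimes> \<phi> t [^] i) <# H)"
    using lcos_m_assoc[OF lc_sub[of "\<phi> t [^] i"]] lc_assoc ac qc by simp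
  also have "\<dots> = \<phi> t [^] (i - 1) <# H" unfolding a1[symmetric] by (rule fx')
  finally show ?case .
qed

lemma ext_apply: "x \<in> carrier F \<Longrightarrow> ext \<phi> q x = \<phi> (x \<otimes>\<^bsub>F\<^esub> inv\<^bsub>F\<^esub> (t [^]\<^bsub>F\<^esub> deg x)) \<otimes> (\<phi> t \<otimes> q) [^] deg x"
  unfolding ext_def by simp

lemma ext_hom:
  assumes ph: "\<phi> \<in> homs F G" and q: "q \<in> carrier G" and comm: "\<forall>k\<in>K. q \<otimes> \<phi> k = \<phi> k \<otimes> q"
  shows "ext \<phi> q \<in> homs F G"
proof -
  have ac: "\<phi> t \<in> carrier G" using ph_closed[OF ph t] .
  have bc: "\<phi> t \<otimes> q \<in> carrier G" using ac q by simp
  have cl: "ext \<phi> q x \<in> carrier G" if x: "x \<in> carrier F" for x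
    unfolding ext_apply[OF x] using ph_closed[OF ph] kpart[OF x] Kc bc by blast
  have ml: "ext \<phi> q (x \<otimes>\<^bsub>F\<^esub> y) = ext \<phi> q x \<otimes> ext \<phi> q y" if x: "x \<in> carrier F" and y: "y \<in> carrier F" for x y
  proof -
    define m where "m = deg x"
    define n where "n = deg y"
    let ?T = "\<lambda>j::int. t [^]\<^bsub>F\<^esub> j"
    let ?b = "\<phi> t \<otimes> q"
    define kx where "kx = x \<otimes>\<^bsub>F\<^esub> inv\<^bsub>F\<^esub> (?T m)"
    define ky where "ky = y \<otimes>\<^bsub>F\<^esub> inv\<^bsub>F\<^esub> (?T n)"
    have kx: "kx \<in> K" unfolding kx_def m_def by (rule kpart[OF x])
    have ky: "ky \<in> K" unfolding ky_def n_def by (rule kpart[OF y])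
    have kxc: "kx \<in> carrier F" and kyc: "ky \<in> carrier F" using kx ky Kc by auto
    have Tc: "?T j \<in> carrier F" for j using t by simp
    have cky: "?T m \<otimes>\<^bsub>F\<^esub> ky \<otimes>\<^bsub>F\<^esub> inv\<^bsub>F\<^esub> (?T m) \<in> carrier F" using conjK[OF ky] Kc by blast
    have dxy: "deg (x \<otimes>\<^bsub>F\<^esub> y) = m + n" unfolding m_def n_def by (rule deg_mult[OF x y])
    have Tmn: "?T (m + n) = ?T m \<otimes>\<^bsub>F\<^esub> ?T n" by (rule F.int_pow_mult[OF t])
    have e1: "(x \<otimes>\<^bsub>F\<^esub> y) \<otimes>\<^bsub>F\<^esub> inv\<^bsub>F\<^esub> (?T (m + n)) = kx \<otimes>\<^bsub>F\<^esub> (?T m \<otimes>\<^bsub>F\<^esub> ky \<otimes>\<^bsub>F\<^esub> inv\<^bsub>F\<^esub> (?T m))"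
      unfolding Tmn kx_def ky_def using x y Tc by (simp add: F.m_assoc F.inv_mult_group F.gc2)
    have pkx: "\<phi> kx \<in> carrier G" "\<phi> ky \<in> carrier G" using ph_closed[OF ph] kxc kyc by auto
    have bm: "?b [^] m \<in> carrier G" "?b [^] n \<in> carrier G" using bc by auto
    have cp: "?b [^] m \<otimes> \<phi> ky \<otimes> inv (?b [^] m) = \<phi> (?T m \<otimes>\<^bsub>F\<^esub> ky \<otimes>\<^bsub>F\<^esub> inv\<^bsub>F\<^esub> (?T m))"
      using conj_pow[OF ph q comm] ky by blast
    have "ext \<phi> q (x \<otimes>\<^bsub>F\<^esub> y) = \<phi> (kx \<otimes>\<^bsub>F\<^esub> (?T m \<otimes>\<^bsub>F\<^esub> ky \<otimes>\<^bsub>F\<^esub> inv\<^bsub>F\<^esub> (?T m))) \<otimes> ?b [^] (m + n)"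
      unfolding ext_apply[OF F.m_closed[OF x y]] dxy e1 ..
    also have "\<dots> = \<phi> kx \<otimes> (?b [^] m \<otimes> \<phi> ky \<otimes> inv (?b [^] m)) \<otimes> (?b [^] m \<otimes> ?b [^] n)"
      using ph_mult[OF ph kxc cky] cp int_pow_mult[OF bc] by simp
    also have "\<dots> = (\<phi> kx \<otimes> ?b [^] m) \<otimes> (\<phi> ky \<otimes> ?b [^] n)"
      using pkx bm by (simp add: m_assoc gc2)
    also have "\<dots> = ext \<phi> q x \<otimes> ext \<phi> q y"
      unfolding ext_apply[OF x] ext_apply[OF y] kx_def ky_def m_def n_def ..
    finally show ?thesis .
  qed
  have "ext \<phi> q \<in> hom F G" unfolding hom_def using cl ml by auto
  moreover have "ext \<phi> q \<in> extensional (carrier F)" unfolding ext_def by simp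
  ultimately show ?thesis unfolding homs_def by simp
qed

end

context setting begin

lemma inH: "h \<in> H \<Longrightarrow> h <# H = H"
  using coset_join3[OF Hc' H] .

lemma conj_coset: assumes h: "h \<in> H" and y: "y \<in> carrier G"
  shows "(h \<otimes> y \<otimes> inv h) <# H = h <# (y <# H)"
proof -
  have hc: "h \<in> carrier G" using Hc' h .
  have ih: "inv h \<in> H" using subgroup.m_inv_closed[OF H h] .
  have "(h \<otimes> y \<otimes> inv h) <# H = (h \<otimes> y) <# (inv h <# H)"
    using lc_assoc hc y by simp
  also have "\<dots> = (h \<otimes> y) <# H" using inH[OF ih] by simp
  also have "\<dots> = h <# (y <# H)" using lc_assoc hc y by simp
  finally show ?thesis .
qed

lemma coset_inv: assumes a: "a \<in> carrier G" and y: "y \<in> a <# H" shows "inv a \<otimes> y \<in> H"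
proof -
  obtain h where "h \<in> H" "y = a \<otimes> h" using y unfolding l_coset_def by blast
  then show ?thesis using a Hc' by (simp add: gc2)
qed

lemma lc_cancel: assumes a: "a \<in> carrier G" and M: "M \<subseteq> carrier G" "N \<subseteq> carrier G"
  and e: "a <# M = a <# N" shows "M = N"
proof -
  have "inv a <# (a <# M) = inv a <# (a <# N)" using e by simp
  then show ?thesis using lcos_m_assoc[OF M(1)] lcos_m_assoc[OF M(2)] a lcos_mult_one M by simp
qed

lemma Qs_sub: assumes ph: "\<phi> \<in> homs F G" shows "subgroup (Qs \<phi>) G"
proof
  show "Qs \<phi> \<subseteq> carrier G" unfolding Qs_def using Hc by auto
next
  fix c d assume c: "c \<in> Qs \<phi>" and d: "d \<in> Qs \<phi>"
  have cH: "c \<in> H" and dH: "d \<in> H" using c d unfolding Qs_def by auto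
  have cc: "c \<in> carrier G" and dc: "d \<in> carrier G" using cH dH Hc' by auto
  have "c \<otimes> d \<in> H" using subgroup.m_closed[OF H cH dH] .
  moreover have "\<forall>k\<in>K. c \<otimes> d \<otimes> \<phi> k = \<phi> k \<otimes> (c \<otimes> d)"
  proof
    fix k assume k: "k \<in> K"
    have pk: "\<phi> k \<in> carrier G" using ph_closed[OF ph] k Kc by blast
    have "c \<otimes> \<phi> k = \<phi> k \<otimes> c" "d \<otimes> \<phi> k = \<phi> k \<otimes> d" using c d k unfolding Qs_def by auto
    then show "c \<otimes> d \<otimes> \<phi> k = \<phi> k \<otimes> (c \<otimes> d)"
      using cc dc pk by (metis m_assoc)
  qed
  moreover have "\<forall>x\<in>carrier F. (c \<otimes> d) <# (\<phi> x <# H) = \<phi> x <# H"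
  proof
    fix x assume x: "x \<in> carrier F"
    have M: "\<phi> x <# H \<subseteq> carrier G" using lc_sub ph_closed[OF ph x] .
    have "c <# (\<phi> x <# H) = \<phi> x <# H" "d <# (\<phi> x <# H) = \<phi> x <# H" using c d x unfolding Qs_def by auto
    then show "(c \<otimes> d) <# (\<phi> x <# H) = \<phi> x <# H" using lcos_m_assoc[OF M cc dc] by simp
  qed
  ultimately show "c \<otimes> d \<in> Qs \<phi>" unfolding Qs_def by simp
next
  show "\<one> \<in> Qs \<phi>" unfolding Qs_def
    using subgroup.one_closed[OF H] ph_closed[OF ph] Kc lcos_mult_one lc_sub by auto
next
  fix c assume c: "c \<in> Qs \<phi>"
  have cH: "c \<in> H" using c unfolding Qs_def by auto
  have cc: "c \<in> carrier G" using cH Hc' by auto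
  have "inv c \<in> H" using subgroup.m_inv_closed[OF H cH] .
  moreover have "\<forall>k\<in>K. inv c \<otimes> \<phi> k = \<phi> k \<otimes> inv c"
  proof
    fix k assume k: "k \<in> K"
    have pk: "\<phi> k \<in> carrier G" using ph_closed[OF ph] k Kc by blast
    have e: "c \<otimes> \<phi> k = \<phi> k \<otimes> c" using c k unfolding Qs_def by auto
    have "inv c \<otimes> \<phi> k \<otimes> c = \<phi> k" by (rule comm_conj'[OF cc pk e])
    then show "inv c \<otimes> \<phi> k = \<phi> k \<otimes> inv c" using cc pk by (metis inv_solve_right m_closed inv_closed)
  qed
  moreover have "\<forall>x\<in>carrier F. inv c <# (\<phi> x <# H) = \<phi> x <# H"
  proof
    fix x assume x: "x \<in> carrier F"
    have M: "\<phi> x <# H \<subseteq> carrier G" using lc_sub ph_closed[OF ph x] .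
    have e: "c <# (\<phi> x <# H) = \<phi> x <# H" using c x unfolding Qs_def by auto
    have "inv c <# (\<phi> x <# H) = inv c <# (c <# (\<phi> x <# H))" by (simp only: e)
    also have "\<dots> = \<phi> x <# H" using lcos_m_assoc[OF M] cc lcos_mult_one[OF M] by simp
    finally show "inv c <# (\<phi> x <# H) = \<phi> x <# H" .
  qed
  ultimately show "inv c \<in> Qs \<phi>" unfolding Qs_def by simp
qed

lemma dat_eq: "dat \<psi> = dat \<phi> \<longleftrightarrow> (\<forall>k\<in>K. \<psi> k = \<phi> k) \<and> (\<forall>x\<in>carrier F. \<psi> x <# H = \<phi> x <# H)"
proof
  assume "dat \<psi> = dat \<phi>"
  then have e1: "restrict \<psi> K = restrict \<phi> K" and e2: "(\<lambda>x\<in>carrier F. \<psi> x <# H) = (\<lambda>x\<in>carrier F. \<phi> x <# H)"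
    unfolding dat_def by auto
  have "\<psi> k = \<phi> k" if "k \<in> K" for k
    using fun_cong[OF e1, of k] that by simp
  moreover have "\<psi> x <# H = \<phi> x <# H" if "x \<in> carrier F" for x
    using fun_cong[OF e2, of x] that by simp
  ultimately show "(\<forall>k\<in>K. \<psi> k = \<phi> k) \<and> (\<forall>x\<in>carrier F. \<psi> x <# H = \<phi> x <# H)" by blast
next
  assume "(\<forall>k\<in>K. \<psi> k = \<phi> k) \<and> (\<forall>x\<in>carrier F. \<psi> x <# H = \<phi> x <# H)"
  then show "dat \<psi> = dat \<phi>" unfolding dat_def by (auto intro!: restrict_ext)
qed

end

context setting begin

lemma Qs_D: assumes "q \<in> Qs \<phi>"
  shows "q \<in> H" "q \<in> carrier G" "\<forall>k\<in>K. q \<otimes> \<phi> k = \<phi> k \<otimes> q" "\<forall>x\<in>carrier F. q <# (\<phi> x <# H) = \<phi> x <# H"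
  using assms Hc' unfolding Qs_def by auto

lemma dat_ext: assumes ph: "\<phi> \<in> homs F G" and q: "q \<in> Qs \<phi>"
  shows "dat (ext \<phi> q) = dat \<phi>"
  unfolding dat_eq
proof (intro conjI ballI)
  have qc: "q \<in> carrier G" using Qs_D[OF q] by simp
  have bc: "\<phi> t \<otimes> q \<in> carrier G" using ph_closed[OF ph t] qc by simp
  fix k assume k: "k \<in> K"
  have kc: "k \<in> carrier F" "deg k = 0" using k unfolding K_def by auto
  show "ext \<phi> q k = \<phi> k" unfolding ext_apply[OF kc(1)] kc(2) using kc(1) ph_closed[OF ph kc(1)] by simp
next
  have qc: "q \<in> carrier G" using Qs_D[OF q] by simp
  have ac: "\<phi> t \<in> carrier G" using ph_closed[OF ph t] .
  have bc: "\<phi> t \<otimes> q \<in> carrier G" using ac qc by simp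
  fix x assume x: "x \<in> carrier F"
  define m where "m = deg x"
  define kx where "kx = x \<otimes>\<^bsub>F\<^esub> inv\<^bsub>F\<^esub> (t [^]\<^bsub>F\<^esub> m)"
  have kxc: "kx \<in> carrier F" unfolding kx_def m_def using kpart[OF x] Kc by blast
  have pkx: "\<phi> kx \<in> carrier G" using ph_closed[OF ph kxc] .
  have "ext \<phi> q x <# H = (\<phi> kx \<otimes> (\<phi> t \<otimes> q) [^] m) <# H" unfolding ext_apply[OF x] kx_def m_def ..
  also have "\<dots> = \<phi> kx <# ((\<phi> t \<otimes> q) [^] m <# H)" using lc_assoc pkx bc by simp
  also have "\<dots> = \<phi> kx <# (\<phi> t [^] m <# H)"
    using coset_pow[OF ph Qs_D(1)[OF q] Qs_D(4)[OF q]] by simp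
  also have "\<dots> = (\<phi> kx \<otimes> \<phi> t [^] m) <# H" using lc_assoc pkx ac by simp
  also have "\<phi> kx \<otimes> \<phi> t [^] m = \<phi> x"
    using kdecomp[OF x] ph_mult[OF ph kxc F.int_pow_closed[OF t]] ph_pow[OF ph t]
    unfolding kx_def m_def by metis
  finally show "ext \<phi> q x <# H = \<phi> x <# H" .
qed

lemma ext_t: assumes ph: "\<phi> \<in> homs F G" and q: "q \<in> carrier G" shows "ext \<phi> q t = \<phi> t \<otimes> q"
  unfolding ext_apply[OF t] dt using t ph_one[OF ph] ph_closed[OF ph t] q by simp

lemma ext_inj: assumes ph: "\<phi> \<in> homs F G" and q: "q \<in> carrier G" "q' \<in> carrier G"
  and e: "ext \<phi> q = ext \<phi> q'" shows "q = q'"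
proof -
  have "\<phi> t \<otimes> q = \<phi> t \<otimes> q'" using ext_t[OF ph q(1)] ext_t[OF ph q(2)] e by simp
  then show ?thesis using q ph_closed[OF ph t] by simp
qed

lemma fiber: assumes ph: "\<phi> \<in> homs F G" and ps: "\<psi> \<in> homs F G" and e: "dat \<psi> = dat \<phi>"
  shows "\<exists>q\<in>Qs \<phi>. \<psi> = ext \<phi> q"
proof -
  have eK: "\<forall>k\<in>K. \<psi> k = \<phi> k" and eC: "\<forall>x\<in>carrier F. \<psi> x <# H = \<phi> x <# H"
    using e unfolding dat_eq by auto
  define a where "a = \<phi> t"
  define q where "q = inv a \<otimes> \<psi> t"
  have ac: "a \<in> carrier G" unfolding a_def using ph_closed[OF ph t] .
  have pt: "\<psi> t \<in> carrier G" using ph_closed[OF ps t] .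
  have qc: "q \<in> carrier G" unfolding q_def using ac pt by simp
  have aq: "a \<otimes> q = \<psi> t" unfolding q_def using ac pt by (simp add: gc1)
  have qH: "q \<in> H"
  proof -
    have "\<psi> t \<in> \<psi> t <# H" by (rule lcos_self[OF pt H])
    then have "\<psi> t \<in> a <# H" using eC t unfolding a_def by simp
    then show ?thesis unfolding q_def by (rule coset_inv[OF ac])
  qed
  have comm: "\<forall>k\<in>K. q \<otimes> \<phi> k = \<phi> k \<otimes> q"
  proof
    fix k assume k: "k \<in> K"
    have kc: "k \<in> carrier F" using k Kc by blast
    have k': "t \<otimes>\<^bsub>F\<^esub> k \<otimes>\<^bsub>F\<^esub> inv\<^bsub>F\<^esub> t \<in> K" using conjK[OF k, of 1] t by simp
    have k'c: "t \<otimes>\<^bsub>F\<^esub> k \<otimes>\<^bsub>F\<^esub> inv\<^bsub>F\<^esub> t \<in> carrier F" using k' Kc by blast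
    have pk: "\<phi> k \<in> carrier G" using ph_closed[OF ph kc] .
    have "\<psi> (t \<otimes>\<^bsub>F\<^esub> k \<otimes>\<^bsub>F\<^esub> inv\<^bsub>F\<^esub> t) = \<phi> (t \<otimes>\<^bsub>F\<^esub> k \<otimes>\<^bsub>F\<^esub> inv\<^bsub>F\<^esub> t)" using eK k' by blast
    moreover have "\<psi> (t \<otimes>\<^bsub>F\<^esub> k \<otimes>\<^bsub>F\<^esub> inv\<^bsub>F\<^esub> t) = (a \<otimes> q) \<otimes> \<phi> k \<otimes> inv (a \<otimes> q)"
      using ph_mult[OF ps] ph_inv[OF ps] t kc eK k aq by simp
    moreover have "\<phi> (t \<otimes>\<^bsub>F\<^esub> k \<otimes>\<^bsub>F\<^esub> inv\<^bsub>F\<^esub> t) = a \<otimes> \<phi> k \<otimes> inv a"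
      using ph_mult[OF ph] ph_inv[OF ph] t kc unfolding a_def by simp
    ultimately have E: "(a \<otimes> q) \<otimes> \<phi> k \<otimes> inv (a \<otimes> q) = a \<otimes> \<phi> k \<otimes> inv a" by simp
    have "q \<otimes> \<phi> k \<otimes> inv q = inv a \<otimes> ((a \<otimes> q) \<otimes> \<phi> k \<otimes> inv (a \<otimes> q)) \<otimes> a"
      using ac qc pk by (simp add: m_assoc inv_mult_group gc2)
    also have "\<dots> = inv a \<otimes> (a \<otimes> \<phi> k \<otimes> inv a) \<otimes> a" by (simp only: E)
    also have "\<dots> = \<phi> k" using ac pk by (simp add: m_assoc gc2)
    finally have "q \<otimes> \<phi> k \<otimes> inv q = \<phi> k" .
    then show "q \<otimes> \<phi> k = \<phi> k \<otimes> q" using qc pk by (metis inv_solve_right m_closed)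
  qed
  have fx: "\<forall>x\<in>carrier F. q <# (\<phi> x <# H) = \<phi> x <# H"
  proof
    fix x assume x: "x \<in> carrier F"
    have px: "\<phi> x \<in> carrier G" using ph_closed[OF ph x] .
    have M: "\<phi> x <# H \<subseteq> carrier G" using lc_sub[OF px] .
    have "a <# (q <# (\<phi> x <# H)) = (a \<otimes> q) <# (\<phi> x <# H)" using lcos_m_assoc[OF M ac qc] .
    also have "\<dots> = \<psi> t <# (\<psi> x <# H)" using eC x aq by simp
    also have "\<dots> = \<psi> (t \<otimes>\<^bsub>F\<^esub> x) <# H" using ph_mult[OF ps t x] lc_assoc pt ph_closed[OF ps x] by simp
    also have "\<dots> = \<phi> (t \<otimes>\<^bsub>F\<^esub> x) <# H" using eC F.m_closed[OF t x] by blast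
    also have "\<dots> = a <# (\<phi> x <# H)" using ph_mult[OF ph t x] lc_assoc ac px unfolding a_def by simp
    finally show "q <# (\<phi> x <# H) = \<phi> x <# H"
      by (rule lc_cancel[OF ac l_coset_subset_G[OF M qc] M])
  qed
  have qQ: "q \<in> Qs \<phi>" unfolding Qs_def using qH comm fx by simp
  have "\<psi> = ext \<phi> q"
  proof (rule extensionalityI)
    show "\<psi> \<in> extensional (carrier F)" using homsD[OF ps] by simp
    show "ext \<phi> q \<in> extensional (carrier F)" unfolding ext_def by simp
  next
    fix x assume x: "x \<in> carrier F"
    define m where "m = deg x"
    define kx where "kx = x \<otimes>\<^bsub>F\<^esub> inv\<^bsub>F\<^esub> (t [^]\<^bsub>F\<^esub> m)"
    have kx: "kx \<in> K" unfolding kx_def m_def using kpart[OF x] .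
    have kxc: "kx \<in> carrier F" using kx Kc by blast
    have "\<psi> x = \<psi> (kx \<otimes>\<^bsub>F\<^esub> t [^]\<^bsub>F\<^esub> m)" using kdecomp[OF x] unfolding kx_def m_def by simp
    also have "\<dots> = \<psi> kx \<otimes> \<psi> t [^] m" using ph_mult[OF ps kxc F.int_pow_closed[OF t]] ph_pow[OF ps t] by simp
    also have "\<dots> = \<phi> kx \<otimes> (\<phi> t \<otimes> q) [^] m" using eK kx aq unfolding a_def by simp
    also have "\<dots> = ext \<phi> q x" unfolding ext_apply[OF x] kx_def m_def ..
    finally show "\<psi> x = ext \<phi> q x" .
  qed
  then show ?thesis using qQ by blast
qed

lemma cj_apply: "x \<in> carrier F \<Longrightarrow> cj h \<phi> x = h \<otimes> \<phi> x \<otimes> inv h"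
  unfolding cj_def by simp

lemma cj_hom: assumes h: "h \<in> carrier G" and ph: "\<phi> \<in> homs F G" shows "cj h \<phi> \<in> homs F G"
proof -
  have "cj h \<phi> \<in> hom F G" unfolding hom_def
  proof (intro CollectI conjI ballI)
    show "cj h \<phi> \<in> carrier F \<rightarrow> carrier G" using cj_apply ph_closed[OF ph] h by auto
  next
    fix x y assume x: "x \<in> carrier F" and y: "y \<in> carrier F"
    show "cj h \<phi> (x \<otimes>\<^bsub>F\<^esub> y) = cj h \<phi> x \<otimes> cj h \<phi> y"
      unfolding cj_apply[OF x] cj_apply[OF y] cj_apply[OF F.m_closed[OF x y]] ph_mult[OF ph x y]
      using h ph_closed[OF ph x] ph_closed[OF ph y] by (simp add: m_assoc gc2)
  qed
  moreover have "cj h \<phi> \<in> extensional (carrier F)" unfolding cj_def by simp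
  ultimately show ?thesis unfolding homs_def by simp
qed

lemma cj_cj: assumes h: "h \<in> carrier G" "h' \<in> carrier G" and ph: "\<phi> \<in> homs F G"
  shows "cj h (cj h' \<phi>) = cj (h \<otimes> h') \<phi>"
proof (rule extensionalityI)
  show "cj h (cj h' \<phi>) \<in> extensional (carrier F)" "cj (h \<otimes> h') \<phi> \<in> extensional (carrier F)"
    unfolding cj_def by simp_all
next
  fix x assume x: "x \<in> carrier F"
  show "cj h (cj h' \<phi>) x = cj (h \<otimes> h') \<phi> x"
    unfolding cj_apply[OF x] using h ph_closed[OF ph x] by (simp add: m_assoc inv_mult_group)
qed

lemma cj_one: assumes ph: "\<phi> \<in> homs F G" shows "cj \<one> \<phi> = \<phi>"
proof (rule extensionalityI)
  show "cj \<one> \<phi> \<in> extensional (carrier F)" unfolding cj_def by simp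
  show "\<phi> \<in> extensional (carrier F)" using homsD[OF ph] by simp
next
  fix x assume x: "x \<in> carrier F"
  show "cj \<one> \<phi> x = \<phi> x" unfolding cj_apply[OF x] using ph_closed[OF ph x] by simp
qed

lemma dat_cj_cong: assumes h: "h \<in> H" and ph: "\<phi>1 \<in> homs F G" "\<phi>2 \<in> homs F G"
  and e: "dat \<phi>1 = dat \<phi>2" shows "dat (cj h \<phi>1) = dat (cj h \<phi>2)"
proof -
  have eK: "\<forall>k\<in>K. \<phi>1 k = \<phi>2 k" and eC: "\<forall>x\<in>carrier F. \<phi>1 x <# H = \<phi>2 x <# H"
    using e unfolding dat_eq by auto
  show ?thesis unfolding dat_eq
  proof (intro conjI ballI)
    fix k assume k: "k \<in> K"
    then show "cj h \<phi>1 k = cj h \<phi>2 k" using cj_apply Kc eK by auto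
  next
    fix x assume x: "x \<in> carrier F"
    have "cj h \<phi>1 x <# H = h <# (\<phi>1 x <# H)"
      unfolding cj_apply[OF x] by (rule conj_coset[OF h ph_closed[OF ph(1) x]])
    also have "\<dots> = h <# (\<phi>2 x <# H)" using eC x by simp
    also have "\<dots> = cj h \<phi>2 x <# H"
      unfolding cj_apply[OF x] by (rule conj_coset[OF h ph_closed[OF ph(2) x], symmetric])
    finally show "cj h \<phi>1 x <# H = cj h \<phi>2 x <# H" .
  qed
qed

lemma stab: assumes u: "u \<in> H" and ph: "\<phi> \<in> homs F G"
  shows "dat (cj u \<phi>) = dat \<phi> \<longleftrightarrow> u \<in> Qs \<phi>"
proof -
  have uc: "u \<in> carrier G" using Hc' u .
  have A: "(cj u \<phi> k = \<phi> k) \<longleftrightarrow> (u \<otimes> \<phi> k = \<phi> k \<otimes> u)" if k: "k \<in> K" for k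
  proof -
    have pk: "\<phi> k \<in> carrier G" using ph_closed[OF ph] k Kc by blast
    have "cj u \<phi> k = u \<otimes> \<phi> k \<otimes> inv u" using cj_apply k Kc by blast
    then show ?thesis using inv_solve_right'[OF pk m_closed[OF uc pk] uc] by simp
  qed
  have B: "(cj u \<phi> x <# H = \<phi> x <# H) \<longleftrightarrow> (u <# (\<phi> x <# H) = \<phi> x <# H)" if x: "x \<in> carrier F" for x
    unfolding cj_apply[OF x] conj_coset[OF u ph_closed[OF ph x]] ..
  show ?thesis unfolding dat_eq Qs_def using A B u by auto
qed

end

context setting begin

definition block where "block \<phi> = {\<psi> \<in> homs F G. \<exists>h\<in>H. dat \<psi> = dat (cj h \<phi>)}"

lemma coset_inv_sub: assumes Q: "subgroup Q G" and a: "a \<in> carrier G" and y: "y \<in> a <# Q"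
  shows "inv a \<otimes> y \<in> Q"
proof -
  obtain h where "h \<in> Q" "y = a \<otimes> h" using y unfolding l_coset_def by blast
  then show ?thesis using a subgroup.mem_carrier[OF Q] by (simp add: gc2)
qed

lemma coset_mem: assumes Q: "subgroup Q G" and a: "a \<in> carrier G" and q: "q \<in> Q"
  shows "a \<otimes> q \<in> a <# Q"
  using q unfolding l_coset_def by blast

lemma block_eqpoll: assumes ph: "\<phi> \<in> homs F G" shows "block \<phi> \<approx> H"
proof -
  let ?Q = "Qs \<phi>"
  have Q: "subgroup ?Q G" by (rule Qs_sub[OF ph])
  have QH: "?Q \<subseteq> H" unfolding Qs_def by auto
  define r where "r h = (SOME r. r \<in> h <# ?Q)" for h
  have r1: "r h \<in> h <# ?Q" if h: "h \<in> H" for h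
  proof -
    have "h \<in> h <# ?Q" by (rule lcos_self[OF Hc'[OF h] Q])
    then show ?thesis unfolding r_def by (rule someI)
  qed
  have uQ: "inv (r h) \<otimes> h \<in> ?Q" if h: "h \<in> H" for h
  proof -
    have "inv h \<otimes> r h \<in> ?Q" by (rule coset_inv_sub[OF Q Hc'[OF h] r1[OF h]])
    then have "inv (inv h \<otimes> r h) \<in> ?Q" by (rule subgroup.m_inv_closed[OF Q])
    moreover have "r h \<in> carrier G" using l_coset_carrier[OF r1[OF h] Hc'[OF h] Q] .
    ultimately show ?thesis using Hc'[OF h] by (simp add: inv_mult_group)
  qed
  have rH: "r h \<in> H" if h: "h \<in> H" for h
  proof -
    have "inv h \<otimes> r h \<in> ?Q" by (rule coset_inv_sub[OF Q Hc'[OF h] r1[OF h]])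
    then have "h \<otimes> (inv h \<otimes> r h) \<in> H" using subgroup.m_closed[OF H h] QH by blast
    moreover have "r h \<in> carrier G" using l_coset_carrier[OF r1[OF h] Hc'[OF h] Q] .
    ultimately show ?thesis using Hc'[OF h] by (simp add: gc1)
  qed
  have rc: "r h \<in> carrier G" if "h \<in> H" for h using rH[OF that] Hc' by blast
  have rcos: "r h <# ?Q = h <# ?Q" if h: "h \<in> H" for h
    using l_repr_independence[OF r1[OF h] Hc'[OF h] Q] by simp
  have req: "r h = r h'" if "h <# ?Q = h' <# ?Q" for h h' unfolding r_def that ..
  have hdec: "h = r h \<otimes> (inv (r h) \<otimes> h)" if h: "h \<in> H" for h
    using rc[OF h] Hc'[OF h] by (simp add: gc1)
  define \<beta> where "\<beta> h = cj (r h) (ext \<phi> (inv (r h) \<otimes> h))" for h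
  have ext_in: "ext \<phi> q \<in> homs F G" if q: "q \<in> ?Q" for q
    using ext_hom[OF ph Qs_D(2)[OF q] Qs_D(3)[OF q]] .
  have dat_beta: "dat (\<beta> h) = dat (cj (r h) \<phi>)" if h: "h \<in> H" for h
    unfolding \<beta>_def by (rule dat_cj_cong[OF rH[OF h] ext_in[OF uQ[OF h]] ph dat_ext[OF ph uQ[OF h]]])
  have beta_in: "\<beta> h \<in> block \<phi>" if h: "h \<in> H" for h
    unfolding block_def using cj_hom[OF rc[OF h] ext_in[OF uQ[OF h]]] dat_beta[OF h] rH[OF h]
    unfolding \<beta>_def by blast
  have cjinv: "cj (inv a) (cj a \<psi>) = \<psi>" if a: "a \<in> carrier G" and ps: "\<psi> \<in> homs F G" for a \<psi>
    using cj_cj[OF inv_closed[OF a] a ps] cj_one[OF ps] a by simp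
  have cjinv': "cj a (cj (inv a) \<psi>) = \<psi>" if a: "a \<in> carrier G" and ps: "\<psi> \<in> homs F G" for a \<psi>
    using cj_cj[OF a inv_closed[OF a] ps] cj_one[OF ps] a by simp
  have inj: "inj_on \<beta> H"
  proof
    fix h h' assume h: "h \<in> H" and h': "h' \<in> H" and e: "\<beta> h = \<beta> h'"
    have irH: "inv (r h) \<in> H" using subgroup.m_inv_closed[OF H rH[OF h]] .
    have "dat (cj (r h) \<phi>) = dat (cj (r h') \<phi>)" using dat_beta[OF h] dat_beta[OF h'] e by simp
    then have "dat (cj (inv (r h)) (cj (r h) \<phi>)) = dat (cj (inv (r h)) (cj (r h') \<phi>))"
      by (rule dat_cj_cong[OF irH cj_hom[OF rc[OF h] ph] cj_hom[OF rc[OF h'] ph]])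
    then have "dat \<phi> = dat (cj (inv (r h) \<otimes> r h') \<phi>)"
      using cjinv[OF rc[OF h] ph] cj_cj[OF inv_closed[OF rc[OF h]] rc[OF h'] ph] by simp
    moreover have "inv (r h) \<otimes> r h' \<in> H" using subgroup.m_closed[OF H irH rH[OF h']] .
    ultimately have "inv (r h) \<otimes> r h' \<in> ?Q" using stab[OF _ ph] by metis
    then have "r h \<otimes> (inv (r h) \<otimes> r h') \<in> r h <# ?Q" by (rule coset_mem[OF Q rc[OF h]])
    then have "r h' \<in> r h <# ?Q" using rc[OF h] rc[OF h'] by (simp add: gc1)
    then have "r h <# ?Q = r h' <# ?Q" using l_repr_independence[OF _ rc[OF h] Q] by blast
    then have "h <# ?Q = h' <# ?Q" using rcos[OF h] rcos[OF h'] by simp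
    then have rr: "r h = r h'" by (rule req)
    then have "ext \<phi> (inv (r h) \<otimes> h) = ext \<phi> (inv (r h) \<otimes> h')"
      using e cjinv[OF rc[OF h] ext_in[OF uQ[OF h]]] cjinv[OF rc[OF h] ext_in[OF uQ[OF h']]]
      unfolding \<beta>_def by (metis)
    then have "inv (r h) \<otimes> h = inv (r h) \<otimes> h'"
      using ext_inj[OF ph] Qs_D(2)[OF uQ[OF h]] Qs_D(2)[OF uQ[OF h']] rr by simp
    then show "h = h'" using rc[OF h] Hc'[OF h] Hc'[OF h'] by simp
  qed
  have surj: "block \<phi> \<subseteq> \<beta> ` H"
  proof
    fix \<psi> assume "\<psi> \<in> block \<phi>"
    then obtain h where ps: "\<psi> \<in> homs F G" and h: "h \<in> H" and e: "dat \<psi> = dat (cj h \<phi>)"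
      unfolding block_def by blast
    let ?r = "r h" let ?u = "inv (r h) \<otimes> h"
    have u: "?u \<in> ?Q" by (rule uQ[OF h])
    have uH: "?u \<in> H" using u QH by blast
    have "dat (cj ?u \<phi>) = dat \<phi>" using stab[OF uH ph] u by simp
    then have "dat (cj ?r (cj ?u \<phi>)) = dat (cj ?r \<phi>)"
      by (rule dat_cj_cong[OF rH[OF h] cj_hom[OF Hc'[OF uH] ph] ph])
    moreover have "cj ?r (cj ?u \<phi>) = cj h \<phi>" using cj_cj[OF rc[OF h] Hc'[OF uH] ph] hdec[OF h] by simp
    ultimately have e2: "dat \<psi> = dat (cj ?r \<phi>)" using e by simp
    have irH: "inv ?r \<in> H" using subgroup.m_inv_closed[OF H rH[OF h]] .
    have "dat (cj (inv ?r) \<psi>) = dat (cj (inv ?r) (cj ?r \<phi>))"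
      by (rule dat_cj_cong[OF irH ps cj_hom[OF rc[OF h] ph] e2])
    then have "dat (cj (inv ?r) \<psi>) = dat \<phi>" using cjinv[OF rc[OF h] ph] by simp
    then obtain q where q: "q \<in> ?Q" and eq: "cj (inv ?r) \<psi> = ext \<phi> q"
      using fiber[OF ph cj_hom[OF inv_closed[OF rc[OF h]] ps]] by blast
    have psi: "\<psi> = cj ?r (ext \<phi> q)" using cjinv'[OF rc[OF h] ps] eq by simp
    define h2 where "h2 = ?r \<otimes> q"
    have qH: "q \<in> H" using q QH by blast
    have h2H: "h2 \<in> H" unfolding h2_def using subgroup.m_closed[OF H rH[OF h] qH] .
    have "h2 \<in> ?r <# ?Q" unfolding h2_def by (rule coset_mem[OF Q rc[OF h] q])
    then have "?r <# ?Q = h2 <# ?Q" using l_repr_independence[OF _ rc[OF h] Q] by blast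
    then have "r h2 = ?r" using rcos[OF h] by (intro req) simp
    moreover have "inv ?r \<otimes> h2 = q" unfolding h2_def using rc[OF h] Qs_D(2)[OF q] by (simp add: gc2)
    ultimately have "\<beta> h2 = \<psi>" unfolding \<beta>_def psi by simp
    then show "\<psi> \<in> \<beta> ` H" using h2H by blast
  qed
  have "bij_betw \<beta> H (block \<phi>)"
    unfolding bij_betw_def using inj surj beta_in by blast
  then have "H \<approx> block \<phi>" unfolding eqpoll_def by blast
  then show ?thesis by (rule eqpoll_sym)
qed

end

context setting begin

lemma block_self: "\<phi> \<in> homs F G \<Longrightarrow> \<phi> \<in> block \<phi>"
  unfolding block_def using cj_one subgroup.one_closed[OF H] by force

lemma block_trans: assumes ph: "\<phi> \<in> homs F G" and ps: "\<psi> \<in> block \<phi>"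
  shows "block \<psi> = block \<phi>"
proof -
  obtain h where psh: "\<psi> \<in> homs F G" and h: "h \<in> H" and e: "dat \<psi> = dat (cj h \<phi>)"
    using ps unfolding block_def by blast
  have hc: "h \<in> carrier G" using Hc'[OF h] .
  show ?thesis
  proof
    show "block \<psi> \<subseteq> block \<phi>"
    proof
      fix \<chi> assume "\<chi> \<in> block \<psi>"
      then obtain h' where ch: "\<chi> \<in> homs F G" and h': "h' \<in> H" and e': "dat \<chi> = dat (cj h' \<psi>)"
        unfolding block_def by blast
      have "dat (cj h' \<psi>) = dat (cj h' (cj h \<phi>))" by (rule dat_cj_cong[OF h' psh cj_hom[OF hc ph] e])
      also have "\<dots> = dat (cj (h' \<otimes> h) \<phi>)" using cj_cj[OF Hc'[OF h'] hc ph] by simp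
      finally have "dat \<chi> = dat (cj (h' \<otimes> h) \<phi>)" using e' by simp
      moreover have "h' \<otimes> h \<in> H" using subgroup.m_closed[OF H h' h] .
      ultimately show "\<chi> \<in> block \<phi>" unfolding block_def using ch by blast
    qed
  next
    show "block \<phi> \<subseteq> block \<psi>"
    proof
      fix \<chi> assume "\<chi> \<in> block \<phi>"
      then obtain h' where ch: "\<chi> \<in> homs F G" and h': "h' \<in> H" and e': "dat \<chi> = dat (cj h' \<phi>)"
        unfolding block_def by blast
      have ih: "inv h \<in> H" using subgroup.m_inv_closed[OF H h] .
      have "dat (cj (inv h) \<psi>) = dat (cj (inv h) (cj h \<phi>))" by (rule dat_cj_cong[OF ih psh cj_hom[OF hc ph] e])
      also have "\<dots> = dat \<phi>" using cj_cj[OF inv_closed[OF hc] hc ph] cj_one[OF ph] hc by simp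
      finally have "dat (cj (inv h) \<psi>) = dat \<phi>" .
      then have "dat (cj h' (cj (inv h) \<psi>)) = dat (cj h' \<phi>)"
        by (rule dat_cj_cong[OF h' cj_hom[OF inv_closed[OF hc] psh] ph])
      then have "dat \<chi> = dat (cj (h' \<otimes> inv h) \<psi>)"
        using e' cj_cj[OF Hc'[OF h'] inv_closed[OF hc] psh] by simp
      moreover have "h' \<otimes> inv h \<in> H" using subgroup.m_closed[OF H h' ih] .
      ultimately show "\<chi> \<in> block \<psi>" unfolding block_def using ch by blast
    qed
  qed
qed

lemma dc_closed:
  assumes ph: "\<phi> \<in> homs F G" and ps: "\<psi> \<in> block \<phi>" and w: "w \<in> carrier F"
    and m: "\<phi> w \<in> double_coset G H a" and ac: "a \<in> carrier G"
  shows "\<psi> w \<in> double_coset G H a"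
proof -
  obtain h where psh: "\<psi> \<in> homs F G" and h: "h \<in> H" and e: "dat \<psi> = dat (cj h \<phi>)"
    using ps unfolding block_def by blast
  have pw: "\<psi> w \<in> carrier G" "\<phi> w \<in> carrier G" using ph_closed[OF psh w] ph_closed[OF ph w] by auto
  have "\<forall>x\<in>carrier F. \<psi> x <# H = cj h \<phi> x <# H" using e unfolding dat_eq by (rule conjunct2)
  then have "\<psi> w <# H = cj h \<phi> w <# H" using w by (rule bspec)
  also have "\<dots> = h <# (\<phi> w <# H)" unfolding cj_apply[OF w] by (rule conj_coset[OF h pw(2)])
  finally have "\<psi> w \<in> h <# (\<phi> w <# H)" using lcos_self[OF pw(1) H] by simp
  then obtain h1 where h1: "h1 \<in> H" "\<psi> w = h \<otimes> (\<phi> w \<otimes> h1)"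
    unfolding l_coset_def by blast
  obtain x y where xy: "x \<in> H" "y \<in> H" "\<phi> w = x \<otimes> (a \<otimes> y)"
    using m unfolding double_coset_def set_mult_def l_coset_def by blast
  have eqw: "\<psi> w = (h \<otimes> x) \<otimes> (a \<otimes> (y \<otimes> h1))"
    using h1 xy h ac Hc' by (simp add: m_assoc)
  have hx: "h \<otimes> x \<in> H" using subgroup.m_closed[OF H h xy(1)] .
  have yh: "y \<otimes> h1 \<in> H" using subgroup.m_closed[OF H xy(2) h1(1)] .
  have k: "a \<otimes> (y \<otimes> h1) \<in> a <# H" by (rule coset_mem[OF H ac yh])
  have "\<psi> w \<in> (\<Union>h\<in>H. \<Union>k\<in>a <# H. {h \<otimes> k})"
    by (rule UN_I[OF hx], rule UN_I[OF k]) (simp add: eqw)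
  then show ?thesis unfolding double_coset_def set_mult_def .
qed

lemma main_count:
  assumes W: "W \<subseteq> carrier F" and gW: "g \<in> W \<rightarrow> carrier G"
  shows "card_dvd H {\<phi> \<in> homs F G. \<forall>w\<in>W. \<phi> w \<in> double_coset G H (g w)}"
proof -
  define S where "S = {\<phi> \<in> homs F G. \<forall>w\<in>W. \<phi> w \<in> double_coset G H (g w)}"
  have bS: "block \<phi> \<subseteq> S" if "\<phi> \<in> S" for \<phi>
  proof
    fix \<psi> assume ps: "\<psi> \<in> block \<phi>"
    have ph: "\<phi> \<in> homs F G" using that unfolding S_def by blast
    have "\<psi> \<in> homs F G" using ps unfolding block_def by blast
    moreover have "\<forall>w\<in>W. \<psi> w \<in> double_coset G H (g w)"
    proof
      fix w assume w: "w \<in> W"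
      have "\<phi> w \<in> double_coset G H (g w)" using that w unfolding S_def by blast
      then show "\<psi> w \<in> double_coset G H (g w)"
        by (rule dc_closed[OF ph ps subsetD[OF W w] _ funcset_mem[OF gW w]])
    qed
    ultimately show "\<psi> \<in> S" unfolding S_def by blast
  qed
  have U: "(\<Union>Xs\<in>block ` S. Xs) = S"
  proof
    show "(\<Union>Xs\<in>block ` S. Xs) \<subseteq> S" using bS by blast
    show "S \<subseteq> (\<Union>Xs\<in>block ` S. Xs)" using block_self unfolding S_def by blast
  qed
  have disj: "pairwise (\<lambda>Xs Ys. disjnt Xs Ys) (block ` S)"
  proof (rule pairwiseI)
    fix Xs Ys assume Xs: "Xs \<in> block ` S" and Ys: "Ys \<in> block ` S" and ne: "Xs \<noteq> Ys"
    obtain \<phi> where \<phi>: "\<phi> \<in> S" "Xs = block \<phi>" using Xs by blast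
    obtain \<phi>' where \<phi>': "\<phi>' \<in> S" "Ys = block \<phi>'" using Ys by blast
    have h1: "\<phi> \<in> homs F G" "\<phi>' \<in> homs F G" using \<phi> \<phi>' unfolding S_def by auto
    show "disjnt Xs Ys"
    proof (rule ccontr)
      assume "\<not> disjnt Xs Ys"
      then have "Xs \<inter> Ys \<noteq> {}" by (simp add: disjnt_def)
      then obtain \<chi> where c1: "\<chi> \<in> Xs" and c2: "\<chi> \<in> Ys" by blast
      have "block \<chi> = block \<phi>" using block_trans[OF h1(1)] c1 \<phi>(2) by simp
      moreover have "block \<chi> = block \<phi>'" using block_trans[OF h1(2)] c2 \<phi>'(2) by simp
      ultimately show False using ne \<phi>(2) \<phi>'(2) by simp
    qed
  qed
  have eq: "Xs \<approx> H" if "Xs \<in> block ` S" for Xs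
    using that block_eqpoll unfolding S_def by blast
  have "(\<Union>Xs\<in>block ` S. Xs) \<approx> block ` S \<times> H"
    by (rule Union_eqpoll_Times[OF eq disj])
  then have "S \<approx> block ` S \<times> H" unfolding U .
  then have S1: "S \<approx> H \<times> block ` S" by (rule eqpoll_trans[OF _ times_commute_eqpoll])
  define C where "C = (\<lambda>Xs. SOME \<phi>. \<phi> \<in> Xs) ` (block ` S)"
  have memX: "(SOME \<phi>. \<phi> \<in> Xs) \<in> Xs" if XX: "Xs \<in> block ` S" for Xs
  proof -
    obtain \<phi> where "\<phi> \<in> S" "Xs = block \<phi>" using XX by blast
    then have "\<phi> \<in> Xs" using block_self unfolding S_def by blast
    then show ?thesis by (rule someI[where P="\<lambda>\<phi>. \<phi> \<in> Xs"])
  qed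
  have "inj_on (\<lambda>Xs. SOME \<phi>. \<phi> \<in> Xs) (block ` S)"
  proof
    fix Xs Ys assume Xs: "Xs \<in> block ` S" and Ys: "Ys \<in> block ` S" and e: "(SOME \<phi>. \<phi> \<in> Xs) = (SOME \<phi>. \<phi> \<in> Ys)"
    show "Xs = Ys"
    proof (rule ccontr)
      assume "Xs \<noteq> Ys"
      then have "disjnt Xs Ys" using disj Xs Ys unfolding pairwise_def by blast
      then show False using memX[OF Xs] memX[OF Ys] e unfolding disjnt_def by auto
    qed
  qed
  then have "bij_betw (\<lambda>Xs. SOME \<phi>. \<phi> \<in> Xs) (block ` S) C" unfolding C_def by (simp add: bij_betw_imageI)
  then have "block ` S \<approx> C" unfolding eqpoll_def by blast
  then have "H \<times> block ` S \<approx> H \<times> C" by (rule times_eqpoll_cong[OF eqpoll_refl])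
  then have "S \<approx> H \<times> C" using S1 eqpoll_trans by blast
  then show ?thesis unfolding card_dvd_def S_def by blast
qed

end

theorem mainTheorem3:
  fixes G :: "('g, 'c) monoid_scheme" and F :: "('f, 'd) monoid_scheme"
    and H :: "'g set" and W :: "'f set" and g :: "'f \<Rightarrow> 'g"
  assumes "group G" and "subgroup H G"
    and "group F" and "finitely_generated_group F"
    and "infinite (rcosets\<^bsub>F\<^esub> (derived F (carrier F)))"
    and "W \<subseteq> carrier F" and "g \<in> W \<rightarrow> carrier G"
  shows "card_dvd H {\<phi> \<in> homs F G. \<forall>w\<in>W. \<phi> w \<in> double_coset G H (g w)}"
proof -
  obtain deg t where t: "t \<in> carrier F"
    and deg: "\<forall>x\<in>carrier F. \<forall>y\<in>carrier F. deg (x \<otimes>\<^bsub>F\<^esub> y) = deg x + (deg y::int)" and dt: "deg t = 1"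
    using surj_Z[OF assms(3,4,5)] by blast
  interpret setting G F H deg t
    by (intro setting.intro setting_axioms.intro assms(1,2,3) t deg dt)
  show ?thesis by (rule main_count[OF assms(6,7)])
qed


end
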